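(* Let $p$ be a prime, $q=p^n$ with $p,n$ fixed, $r$ a natural number, and $d$ a natural number with $(d,p)=1$ and $d\ge q^r$. Let $f$ be chosen uniformly at random from $\mathcal{G}_d$ and let $N(f)=(\#C_f(\mathbb{F}_{q^r})-1)/p$. For each $e\mid r$ let $X_{e,1},\dots,X_{e,\pi(e)}$ be Bernoulli random variables with parameter $1/p$ (value $1$ with probability $1/p$, $0$ otherwise), all $\{X_{e,i}\}_{e\mid r,1\le i\le\pi(e)}$ independent. Then: (i) If $(r,p)=1$, $N(f)$ has the same distribution as $\sum_{e\mid r}e\sum_{i=1}^{\pi(e)}X_{e,i}$; in particular the mean of $N(f)$ is $q^r/p$. (ii) If $p\mid r$, then $N(f)-q^{r/p}$ has the same distribution as $\sum_{e\mid r,\ (r/e,p)=1}e\sum_{i=1}^{\pi(e)}X_{e,i}$; in particular the mean of $N(f)$ is $\frac{q^r}{p}+\left(1-\frac1p\right)q^{r/p}$.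
   Context: $\mathcal{G}_d$ is the set of monic polynomials of degree $d$ in $\mathbb{F}_q[x]$. For $f\in\mathbb{F}_q[x]$ of degree prime to $p$, $C_f$ is the normalisation of the projective closure of the affine curve $y^p-y=f(x)$ over $\mathbb{F}_q$; its number of $\mathbb{F}_{q^r}$-rational points is congruent to $1$ modulo $p$. $\pi(e)$ denotes the number of monic irreducible polynomials of degree $e$ in $\mathbb{F}_q[x]$. *)

theory Defs
  imports "HOL-Probability.Probability" "HOL-Computational_Algebra.Polynomial"
begin

(* A homomorphism of rings with 1 (between fields it is automatically injective):
   used to view F_q (type 'a) inside F_{q^r} (type 'b). *)
definition is_ring_hom :: "('a::ring_1 \<Rightarrow> 'b::ring_1) \<Rightarrow> bool" where
  "is_ring_hom \<phi> \<longleftrightarrow> \<phi> 1 = 1 \<and> (\<forall>x y. \<phi> (x + y) = \<phi> x + \<phi> y) \<and> (\<forall>x y. \<phi> (x * y) = \<phi> x * \<phi> y)"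

definition monic_polys :: "nat \<Rightarrow> ('a::field) poly set" where
  "monic_polys d = {f. lead_coeff f = 1 \<and> degree f = d}"

definition num_monic_irred :: "('a::field) itself \<Rightarrow> nat \<Rightarrow> nat" where
  "num_monic_irred _ e = card {g :: 'a poly. lead_coeff g = 1 \<and> degree g = e \<and> irreducible g}"

(* Number of F_{q^r}-rational points of C_f, the smooth projective model of y^p - y = f(x):
   the affine curve is smooth, and since p does not divide deg f there is exactly one
   (rational) point at infinity. *)
definition AS_points :: "nat \<Rightarrow> ('a::field \<Rightarrow> 'b::{finite,field}) \<Rightarrow> 'a poly \<Rightarrow> nat" where
  "AS_points p \<phi> f = card {xy :: 'b \<times> 'b. snd xy ^ p - snd xy = poly (map_poly \<phi> f) (fst xy)} + 1"

definition N_AS :: "nat \<Rightarrow> ('a::field \<Rightarrow> 'b::{finite,field}) \<Rightarrow> 'a poly \<Rightarrow> nat" where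
  "N_AS p \<phi> f = (AS_points p \<phi> f - 1) div p"

definition bern_sum_pmf :: "nat \<Rightarrow> nat set \<Rightarrow> (nat \<Rightarrow> nat) \<Rightarrow> nat pmf" where
  "bern_sum_pmf p E \<pi> =
     map_pmf (\<lambda>X. \<Sum>e\<in>E. e * (\<Sum>i\<in>{1..\<pi> e}. of_bool (X (e, i))))
       (Pi_pmf (SIGMA e:E. {1..\<pi> e}) False (\<lambda>_. bernoulli_pmf (1 / real p)))"

end

theory Submission
  imports Defs "HOL-Computational_Algebra.Computational_Algebra"
begin

lemma ff_pow_card:
  fixes x :: "'c :: {finite,field}"
  shows "x ^ CARD('c) = x"
proof (cases "x = 0")
  case False
  have "x * (\<Prod>y\<in>UNIV-{0}. x * y) = x * x ^ (card (UNIV :: 'c set) - 1) * \<Prod>(UNIV-{0})"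
    by (simp add: prod.distrib mult_ac)
  also have "x * x ^ (card (UNIV :: 'c set) - 1) = x ^ Suc (card (UNIV :: 'c set) - 1)"
    by (subst power_Suc) auto
  also have "Suc (card (UNIV :: 'c set) - 1) = card (UNIV :: 'c set)"
    using finite_UNIV_card_ge_0[where ?'a = 'c] by simp
  also have "(\<Prod>y\<in>UNIV-{0}. x * y) = (\<Prod>y\<in>UNIV-{0}. y)"
    by (rule prod.reindex_bij_witness[of _ "\<lambda>y. y / x" "\<lambda>y. x * y"]) (use False in auto)
  finally show ?thesis
    by simp
qed (use finite_UNIV_card_ge_0[where ?'a = 'c] in auto)

lemma ff_pow_card_pow:
  fixes x :: "'c :: {finite,field}"
  shows "x ^ (CARD('c) ^ k) = x"
  by (induction k) (simp_all add: ff_pow_card power_mult)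

lemma frob_add:
  fixes x y :: "'c :: field"
  assumes "CHAR('c) = p" "prime p"
  shows "(x + y) ^ (p ^ k) = x ^ (p ^ k) + y ^ (p ^ k)"
  using freshmans_dream'[of "p ^ k" k x y] assms by simp

lemma frob_diff:
  fixes x y :: "'c :: field"
  assumes "CHAR('c) = p" "prime p"
  shows "(x - y) ^ (p ^ k) = x ^ (p ^ k) - y ^ (p ^ k)"
proof -
  have "x ^ (p ^ k) = ((x - y) + y) ^ (p ^ k)" by simp
  also have "\<dots> = (x - y) ^ (p ^ k) + y ^ (p ^ k)" by (rule frob_add[OF assms])
  finally show ?thesis by simp
qed

lemma frob_sum:
  fixes f :: "'d \<Rightarrow> 'c :: field"
  assumes "CHAR('c) = p" "prime p"
  shows "(sum f A) ^ (p ^ k) = (\<Sum>i\<in>A. f i ^ (p ^ k))"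
  using freshmans_dream_sum'[of "p ^ k" k f A] assms by simp

lemma frob_inj:
  fixes x y :: "'c :: field"
  assumes "CHAR('c) = p" "prime p" "x ^ (p ^ k) = y ^ (p ^ k)"
  shows "x = y"
proof -
  have "(x - y) ^ (p ^ k) = 0" using frob_diff[OF assms(1,2)] assms(3) by simp
  thus ?thesis by simp
qed

lemma fiber_card:
  fixes G :: "'c::ab_group_add set" and \<psi> :: "'c \<Rightarrow> 'd"
  assumes cl: "\<And>x y. x \<in> G \<Longrightarrow> y \<in> G \<Longrightarrow> x - y \<in> G"
    and eq: "\<And>x y. x \<in> G \<Longrightarrow> y \<in> G \<Longrightarrow> \<psi> x = \<psi> y \<longleftrightarrow> x - y \<in> Z"
    and x0: "x0 \<in> G"
  shows "card {x\<in>G. \<psi> x = \<psi> x0} = card (Z \<inter> G)"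
proof -
  have z0: "0 \<in> G" using cl[OF x0 x0] by simp
  have cl2: "z + x0 \<in> G" if "z \<in> G" for z
  proof -
    have "0 - x0 \<in> G" using cl[OF z0 x0] .
    from cl[OF that this] show ?thesis by simp
  qed
  have "{x\<in>G. \<psi> x = \<psi> x0} = (\<lambda>z. z + x0) ` (Z \<inter> G)"
  proof (rule equalityI; rule subsetI)
    fix x assume "x \<in> {x\<in>G. \<psi> x = \<psi> x0}"
    hence "x \<in> G" "x - x0 \<in> Z" using eq x0 by auto
    moreover have "x - x0 \<in> G" using cl \<open>x \<in> G\<close> x0 by blast
    ultimately show "x \<in> (\<lambda>z. z + x0) ` (Z \<inter> G)" by (intro image_eqI[of _ _ "x - x0"]) auto
  next
    fix x assume "x \<in> (\<lambda>z. z + x0) ` (Z \<inter> G)"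
    then obtain z where z: "z \<in> Z" "z \<in> G" "x = z + x0" by auto
    have "z + x0 \<in> G" using cl2 z by blast
    moreover have "\<psi> (z + x0) = \<psi> x0" using eq[OF \<open>z + x0 \<in> G\<close> x0] z by simp
    ultimately show "x \<in> {x\<in>G. \<psi> x = \<psi> x0}" using z by simp
  qed
  also have "card \<dots> = card (Z \<inter> G)" by (rule card_image) (auto intro: inj_onI)
  finally show ?thesis .
qed

lemma count_pre:
  assumes fin: "finite G"
    and fib: "\<And>x. x \<in> G \<Longrightarrow> card {x'\<in>G. \<psi> x' = \<psi> x} = k0"
  shows "card {x\<in>G. \<psi> x \<in> T} = card (T \<inter> \<psi> ` G) * k0"
proof -
  have "{x\<in>G. \<psi> x \<in> T} = (\<Union>v\<in>T \<inter> \<psi> ` G. {x\<in>G. \<psi> x = v})" by auto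
  also have "card \<dots> = (\<Sum>v\<in>T \<inter> \<psi> ` G. card {x\<in>G. \<psi> x = v})"
    by (rule card_UN_disjoint) (use fin in auto)
  also have "\<dots> = (\<Sum>v\<in>T \<inter> \<psi> ` G. k0)"
    by (rule sum.cong) (use fib in auto)
  finally show ?thesis by simp
qed

lemma CHAR_dvd_CARD':
  shows "CHAR('c::{finite,ring_1}) dvd CARD('c)"
proof -
  define c where "c = CHAR('c)"
  have cpos: "c > 0" unfolding c_def by (rule finite_imp_CHAR_pos) simp
  define H :: "'c set" where "H = range of_int"
  have Hc: "H = of_int ` {0..<int c}"
  proof (rule equalityI; rule subsetI)
    fix x assume "x \<in> H"
    then obtain a where a: "x = of_int a" by (auto simp: H_def)
    have "int c dvd a - a mod int c" by (rule dvd_minus_mod)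
    hence "(of_int (a - a mod int c) :: 'c) = 0"
      using of_int_eq_0_iff_char_dvd[of "a - a mod int c", where 'a='c] by (simp add: c_def)
    hence "of_int a = (of_int (a mod int c) :: 'c)" by simp
    moreover have "a mod int c \<in> {0..<int c}" using cpos by simp
    ultimately show "x \<in> of_int ` {0..<int c}" using a by blast
  qed (unfold H_def, blast)
  have "inj_on (of_int :: int \<Rightarrow> 'c) {0..<int c}"
  proof (rule inj_onI)
    fix a b assume ab: "a \<in> {0..<int c}" "b \<in> {0..<int c}" "(of_int a :: 'c) = of_int b"
    hence "(of_int (a - b) :: 'c) = 0" by simp
    hence "int c dvd a - b" using of_int_eq_0_iff_char_dvd[of "a - b", where 'a='c] by (simp add: c_def)
    moreover have "\<bar>a - b\<bar> < int c" using ab by auto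
    ultimately show "a = b" using dvd_imp_le_int[of "a - b" "int c"] by (cases "a = b") auto
  qed
  hence cardH: "card H = c" unfolding Hc by (simp add: card_image)
  define \<psi> where "\<psi> x = (\<lambda>h. x + h) ` H" for x :: 'c
  have eq: "\<psi> x = \<psi> y \<longleftrightarrow> x - y \<in> H" for x y
  proof
    assume "\<psi> x = \<psi> y"
    moreover have "y \<in> \<psi> y" unfolding \<psi>_def H_def by (rule image_eqI[of _ _ 0]) (simp, rule range_eqI[of _ _ 0], simp)
    ultimately have "y \<in> \<psi> x" by simp
    then obtain h where "h \<in> H" "y = x + h" by (auto simp: \<psi>_def)
    then obtain a where "y = x + of_int a" by (auto simp: H_def)
    hence "x - y = of_int (- a)" by simp
    thus "x - y \<in> H" unfolding H_def by (rule range_eqI)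
  next
    assume "x - y \<in> H"
    then obtain a where a: "x - y = of_int a" by (auto simp: H_def)
    show "\<psi> x = \<psi> y"
    proof (rule equalityI; rule subsetI)
      fix z assume "z \<in> \<psi> x"
      then obtain b where "z = x + of_int b" by (auto simp: \<psi>_def H_def)
      hence "z = y + of_int (a + b)" using a by (simp add: algebra_simps)
      thus "z \<in> \<psi> y" unfolding \<psi>_def H_def by (rule image_eqI[OF _ rangeI])
    next
      fix z assume "z \<in> \<psi> y"
      then obtain b where "z = y + of_int b" by (auto simp: \<psi>_def H_def)
      hence "z = x + of_int (b - a)" using a by (simp add: algebra_simps)
      thus "z \<in> \<psi> x" unfolding \<psi>_def H_def by (rule image_eqI[OF _ rangeI])
    qed
  qed
  have fib: "card {x'\<in>UNIV. \<psi> x' = \<psi> x} = card H" for x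
    using fiber_card[of UNIV \<psi> H x] eq by simp
  have "card {x\<in>UNIV. \<psi> x \<in> UNIV} = card (UNIV \<inter> \<psi> ` UNIV) * card H"
    by (rule count_pre) (use fib in auto)
  thus ?thesis using cardH by (simp add: c_def)
qed

lemma char_ff:
  assumes "CARD('c::{finite,field}) = p ^ k" "prime p" "k \<ge> 1"
  shows "CHAR('c) = p"
proof -
  have "CHAR('c) > 0" by (rule finite_imp_CHAR_pos) simp
  hence pc: "prime CHAR('c)" by (rule prime_CHAR_semidom)
  have "CHAR('c) dvd p ^ k" using CHAR_dvd_CARD'[where 'c='c] assms by simp
  hence "CHAR('c) dvd p" using pc prime_dvd_power by blast
  thus ?thesis using pc assms(2) primes_dvd_imp_eq by blast
qed

definition polys_below :: "nat \<Rightarrow> ('c::zero) poly set" where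
  "polys_below D = {h. \<forall>i\<ge>D. coeff h i = 0}"

lemma polys_below_0: "polys_below 0 = {0}"
  by (auto simp: polys_below_def poly_eq_iff)

lemma polys_below_Suc:
  "polys_below (Suc D) = (\<lambda>(a,h). pCons a h) ` (UNIV \<times> polys_below D)"
proof (rule equalityI; rule subsetI)
  fix h assume h: "h \<in> polys_below (Suc D)"
  obtain a h' where hh: "h = pCons a h'" by (cases h) auto
  have "h' \<in> polys_below D"
    using h unfolding polys_below_def hh by (auto simp: coeff_pCons)
  thus "h \<in> (\<lambda>(a,h). pCons a h) ` (UNIV \<times> polys_below D)" using hh by auto
next
  fix h assume "h \<in> (\<lambda>(a,h). pCons a h) ` (UNIV \<times> polys_below D)"
  then obtain a h' where hh: "h = pCons a h'" "h' \<in> polys_below D" by auto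
  show "h \<in> polys_below (Suc D)" unfolding polys_below_def hh(1) mem_Collect_eq
  proof (intro allI impI)
    fix i assume "Suc D \<le> i"
    then obtain j where "i = Suc j" "D \<le> j" by (cases i) auto
    thus "coeff (pCons a h') i = 0" using hh(2) by (simp add: polys_below_def)
  qed
qed

lemma polys_below_finite_card:
  "finite (polys_below D :: ('c::{finite,zero}) poly set) \<and> card (polys_below D :: 'c poly set) = CARD('c) ^ D"
proof (induction D)
  case 0
  then show ?case by (simp add: polys_below_0)
next
  case (Suc D)
  have inj: "inj_on (\<lambda>(a,h). pCons a h) (UNIV \<times> (polys_below D :: 'c poly set))"
    by (auto intro!: inj_onI)
  show ?case unfolding polys_below_Suc
    using Suc inj by (simp add: card_image card_cartesian_product)
qed

lemma polys_below_iff: "h \<in> polys_below D \<longleftrightarrow> h = 0 \<or> degree h < D"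
proof
  assume h: "h \<in> polys_below D"
  show "h = 0 \<or> degree h < D"
  proof (rule ccontr)
    assume "\<not> (h = 0 \<or> degree h < D)"
    hence "h \<noteq> 0" "degree h \<ge> D" by auto
    hence "coeff h (degree h) = 0" using h by (auto simp: polys_below_def)
    thus False using \<open>h \<noteq> 0\<close> by simp
  qed
next
  assume "h = 0 \<or> degree h < D"
  thus "h \<in> polys_below D" by (auto simp: polys_below_def coeff_eq_0)
qed

lemma polys_below_diff: "x \<in> polys_below D \<Longrightarrow> y \<in> polys_below D \<Longrightarrow> x - y \<in> polys_below D"
  by (simp add: polys_below_def)

lemma polys_below_add: "x \<in> polys_below D \<Longrightarrow> y \<in> polys_below D \<Longrightarrow> x + y \<in> polys_below D"
  by (simp add: polys_below_def)

lemma polys_below_mono: "D \<le> D' \<Longrightarrow> polys_below D \<subseteq> polys_below D'"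
  by (auto simp: polys_below_def)

lemma roots_dvd_count:
  fixes P h k :: "'c::field poly"
  assumes "P = h * k" "P \<noteq> 0" "card {x. poly P x = 0} = degree P"
  shows "card {x. poly h x = 0} = degree h"
proof -
  have hk: "h \<noteq> 0" "k \<noteq> 0" using assms by auto
  have "{x. poly P x = 0} = {x. poly h x = 0} \<union> {x. poly k x = 0}"
    using assms(1) by auto
  hence "card {x. poly P x = 0} \<le> card {x. poly h x = 0} + card {x. poly k x = 0}"
    by (simp add: card_Un_le)
  moreover have "card {x. poly k x = 0} \<le> degree k" by (rule card_poly_roots_bound) fact
  moreover have "card {x. poly h x = 0} \<le> degree h" by (rule card_poly_roots_bound) fact
  moreover have "degree P = degree h + degree k" using assms(1) hk by (simp add: degree_mult_eq)
  ultimately show ?thesis using assms(3) by linarith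
qed

lemma pow_iter_dvd:
  fixes g x :: "'c::{euclidean_ring_cancel}"
  assumes "g dvd x ^ s - x"
  shows "g dvd x ^ (s ^ k) - x"
proof -
  have base: "x ^ s mod g = x mod g" using assms by (simp add: mod_eq_dvd_iff)
  have "x ^ (s ^ k) mod g = x mod g"
  proof (induction k)
    case 0 then show ?case by simp
  next
    case (Suc k)
    have "x ^ (s ^ Suc k) = (x ^ (s ^ k)) ^ s" by (simp add: power_mult[symmetric] mult.commute)
    hence "x ^ (s ^ Suc k) mod g = ((x ^ (s ^ k) mod g) ^ s) mod g" by (simp add: power_mod)
    also have "\<dots> = ((x mod g) ^ s) mod g" using Suc by simp
    also have "\<dots> = x mod g" using base by (simp add: power_mod)
    finally show ?case .
  qed
  thus ?thesis by (simp add: mod_eq_dvd_iff)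
qed

lemma prime_elem_dvd_prod_iff':
  fixes p :: "'c::comm_semiring_1"
  assumes "prime_elem p" "finite A"
  shows "p dvd prod f A \<longleftrightarrow> (\<exists>x\<in>A. p dvd f x)"
  using assms(2)
proof (induction A rule: finite_induct)
  case empty
  then show ?case using assms(1) prime_elem_not_unit by auto
next
  case (insert x F)
  then show ?case using assms(1) by (simp add: prime_elem_dvd_mult_iff)
qed

lemma irred_dvd_frob:
  fixes g :: "'c::{finite,field} poly"
  assumes irr: "irreducible g"
  shows "g dvd [:0,1:] ^ (CARD('c) ^ degree g) - [:0,1:]"
proof -
  define X :: "'c poly" where "X = [:0,1:]"
  define e where "e = degree g"
  have g0: "g \<noteq> 0" using irr by auto
  have e1: "e \<ge> 1"
  proof (rule ccontr)
    assume "\<not> e \<ge> 1" hence "degree g = 0" by (simp add: e_def)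
    hence "is_unit g" using g0 by (simp add: is_unit_iff_degree)
    thus False using irr by (simp add: irreducible_def)
  qed
  have pr: "prime_elem g" using irr by (rule field_poly_irreducible_imp_prime)
  have cardS: "CARD('c) ^ e \<ge> 1" by simp
  show ?thesis
  proof (cases "g dvd X")
    case True
    obtain N' where N': "CARD('c) ^ e = Suc N'" using cardS by (cases "CARD('c) ^ e") auto
    have "X ^ (CARD('c) ^ e) - X = X * (X ^ N' - 1)"
      unfolding N' by (simp add: algebra_simps)
    thus ?thesis using True unfolding X_def e_def by (metis dvd_mult2)
  next
    case nX: False
    define R where "R = polys_below e - {0 :: 'c poly}"
    have finR: "finite R" using polys_below_finite_card[of e, where 'c='c] by (simp add: R_def)
    have ndvd: "\<not> g dvd h" if "h \<in> R" for h
    proof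
      assume "g dvd h"
      moreover have "h \<noteq> 0" "degree h < e" using that by (auto simp: R_def polys_below_iff)
      ultimately show False using dvd_imp_degree_le[of g h] by (simp add: e_def)
    qed
    define m where "m h = (X * h) mod g" for h
    have mR: "m h \<in> R" if "h \<in> R" for h
    proof -
      have "\<not> g dvd X * h" using pr nX ndvd[OF that] by (simp add: prime_elem_dvd_mult_iff)
      hence "m h \<noteq> 0" by (simp add: m_def mod_eq_0_iff_dvd)
      moreover have "degree (m h) < e" using g0 \<open>m h \<noteq> 0\<close> unfolding m_def e_def
        by (intro degree_mod_less') auto
      ultimately show ?thesis by (simp add: R_def polys_below_iff)
    qed
    have minj: "inj_on m R"
    proof (rule inj_onI)
      fix h1 h2 assume h: "h1 \<in> R" "h2 \<in> R" "m h1 = m h2"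
      hence "g dvd X * h1 - X * h2" by (simp add: m_def mod_eq_dvd_iff)
      hence "g dvd X * (h1 - h2)" by (simp add: algebra_simps)
      hence d: "g dvd h1 - h2" using pr nX by (simp add: prime_elem_dvd_mult_iff)
      have "h1 - h2 \<in> polys_below e" using h polys_below_diff by (auto simp: R_def)
      show "h1 = h2"
      proof (rule ccontr)
        assume "h1 \<noteq> h2"
        hence "h1 - h2 \<in> R" using \<open>h1 - h2 \<in> polys_below e\<close> by (simp add: R_def)
        with ndvd d show False by blast
      qed
    qed
    have mimg: "m ` R = R"
      by (rule endo_inj_surj[OF finR]) (use mR minj in auto)
    have "prod (\<lambda>h. h) R = prod (\<lambda>h. h) (m ` R)" using mimg by simp
    also have "\<dots> = prod m R" using prod.reindex[OF minj, of "\<lambda>h. h"] by simp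
    finally have e1': "prod (\<lambda>h. h) R mod g = prod m R mod g" by simp
    have "prod m R mod g = prod (\<lambda>h. X * h) R mod g"
      unfolding m_def by (rule mod_prod_eq)
    also have "prod (\<lambda>h. X * h) R = X ^ card R * prod (\<lambda>h. h) R"
      by (simp add: prod.distrib)
    finally have "(X ^ card R * prod (\<lambda>h. h) R) mod g = prod (\<lambda>h. h) R mod g"
      using e1' by simp
    hence "g dvd X ^ card R * prod (\<lambda>h. h) R - prod (\<lambda>h. h) R"
      by (simp only: mod_eq_dvd_iff)
    hence "g dvd (X ^ card R - 1) * prod (\<lambda>h. h) R" by (simp add: algebra_simps)
    moreover have "\<not> g dvd prod (\<lambda>h. h) R"
      using pr finR ndvd by (simp add: prime_elem_dvd_prod_iff')
    ultimately have "g dvd X ^ card R - 1" using pr by (simp add: prime_elem_dvd_mult_iff)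
    hence "g dvd X * (X ^ card R - 1)" by simp
    moreover have "card R + 1 = CARD('c) ^ e"
    proof -
      have "0 \<in> polys_below e" by (simp add: polys_below_def)
      hence "card R = card (polys_below e :: 'c poly set) - 1"
        unfolding R_def using polys_below_finite_card[of e, where 'c='c] by (intro card_Diff_singleton) auto
      thus ?thesis using polys_below_finite_card[of e, where 'c='c] cardS by simp
    qed
    moreover have "X * (X ^ card R - 1) = X ^ (card R + 1) - X" by (simp add: algebra_simps)
    ultimately show ?thesis by (simp add: X_def e_def)
  qed
qed

lemma ideal_irred_dvd:
  fixes g :: "'c::field poly" and I :: "'c poly set"
  assumes irr: "irreducible g" and gI: "g \<in> I"
    and sub: "\<And>x y. x \<in> I \<Longrightarrow> y \<in> I \<Longrightarrow> x - y \<in> I"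
    and mul: "\<And>x k. x \<in> I \<Longrightarrow> k * x \<in> I"
    and one: "1 \<notin> I"
    and hI: "h \<in> I"
  shows "g dvd h"
proof -
  have g0: "g \<noteq> 0" using irr by auto
  define P where "P d \<longleftrightarrow> (\<exists>m\<in>I. m \<noteq> 0 \<and> degree m = d)" for d
  have "P (degree g)" using gI g0 by (auto simp: P_def)
  define d0 where "d0 = (LEAST d. P d)"
  have "P d0" unfolding d0_def by (rule LeastI) fact
  then obtain m where m: "m \<in> I" "m \<noteq> 0" "degree m = d0" by (auto simp: P_def)
  have minim: "degree m \<le> degree k" if "k \<in> I" "k \<noteq> 0" for k
    using m(3) that Least_le[of P "degree k"] unfolding d0_def P_def by auto
  have mdvd: "m dvd k" if "k \<in> I" for k
  proof (rule ccontr)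
    assume nd: "\<not> m dvd k"
    have "k mod m = k - (k div m) * m" by (simp add: minus_div_mult_eq_mod)
    moreover have "(k div m) * m \<in> I" using mul m(1) by blast
    ultimately have kI: "k mod m \<in> I" using sub that by metis
    have "k mod m \<noteq> 0" using nd by (simp add: mod_eq_0_iff_dvd)
    hence "degree (k mod m) < degree m" using m(2) by (intro degree_mod_less') auto
    with minim[OF kI \<open>k mod m \<noteq> 0\<close>] show False by simp
  qed
  obtain c where gc: "g = m * c" using mdvd[OF gI] by blast
  have "\<not> is_unit m"
  proof
    assume u: "is_unit m"
    then obtain w where "1 = m * w" by (auto elim: dvdE)
    hence "1 \<in> I" using mul[OF m(1), of w] by (simp add: mult.commute)
    thus False using one by simp
  qed
  hence "is_unit c" using irr gc by (auto simp: irreducible_def)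
  then obtain w where "1 = c * w" by (auto elim: dvdE)
  hence "m = g * w" using gc by (metis mult.assoc mult.right_neutral)
  hence "g dvd m" by simp
  thus ?thesis using mdvd[OF hI] by (rule dvd_trans)
qed

lemma monic_irred_dvd_eq:
  fixes g h :: "'c::field poly"
  assumes "irreducible g" "irreducible h" "lead_coeff g = 1" "lead_coeff h = 1" "g dvd h"
  shows "g = h"
proof -
  obtain c where hc: "h = g * c" using assms(5) by blast
  have "\<not> is_unit g" using assms(1) by (auto simp: irreducible_def)
  hence "is_unit c" using assms(2) hc by (auto simp: irreducible_def)
  hence "c \<noteq> 0" by auto
  hence "degree c = 0" using \<open>is_unit c\<close> by (simp add: is_unit_iff_degree)
  hence "c = [:lead_coeff c:]" by (metis degree_0_id)
  moreover have "lead_coeff c = 1" using assms(3,4) hc by (simp add: lead_coeff_mult)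
  ultimately have "c = 1" by (simp add: one_pCons)
  thus ?thesis using hc by simp
qed

locale AS =
  fixes p n r q :: nat and \<phi> :: "'a::{finite,field} \<Rightarrow> 'b::{finite,field}"
  assumes prime_p: "prime p" and n_pos: "n \<ge> 1" and q_def: "q = p ^ n" and r_pos: "r \<ge> 1"
    and card_a: "CARD('a) = q" and card_b: "CARD('b) = q ^ r" and hom: "is_ring_hom \<phi>"
begin

lemma p2: "p \<ge> 2" using prime_p by (simp add: prime_ge_2_nat)

lemma q2: "q \<ge> 2"
proof -
  have "p ^ 1 \<le> p ^ n" using n_pos p2 by (intro power_increasing) auto
  thus ?thesis using p2 q_def by simp
qed

lemma q0: "q > 0" using q2 by simp

lemma qpow_ge: "q ^ m \<ge> 1" using q2 by simp

lemma char_a: "CHAR('a) = p"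
  by (rule char_ff[of p n]) (use card_a q_def prime_p n_pos in auto)

lemma char_b: "CHAR('b) = p"
proof (rule char_ff[of p "n * r"])
  show "CARD('b) = p ^ (n * r)" using card_b q_def by (simp add: power_mult)
  show "1 \<le> n * r" using n_pos r_pos by simp
qed (use prime_p in auto)

lemma phi_add: "\<phi> (x + y) = \<phi> x + \<phi> y" using hom by (simp add: is_ring_hom_def)
lemma phi_mult: "\<phi> (x * y) = \<phi> x * \<phi> y" using hom by (simp add: is_ring_hom_def)
lemma phi_1: "\<phi> 1 = 1" using hom by (simp add: is_ring_hom_def)
lemma phi_0: "\<phi> 0 = 0"
proof -
  have "\<phi> 0 = \<phi> (0 + 0)" by simp
  also have "\<dots> = \<phi> 0 + \<phi> 0" by (rule phi_add)
  finally show ?thesis by (metis add_cancel_left_right)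
qed
lemma phi_neg: "\<phi> (- x) = - \<phi> x"
proof -
  have "\<phi> x + \<phi> (- x) = 0" using phi_add[of x "-x"] phi_0 by simp
  thus ?thesis by (simp add: eq_neg_iff_add_eq_0 add.commute)
qed
lemma phi_diff: "\<phi> (x - y) = \<phi> x - \<phi> y"
  using phi_add[of x "-y"] phi_neg[of y] by simp
lemma phi_pow: "\<phi> (x ^ k) = \<phi> x ^ k"
  by (induction k) (simp_all add: phi_1 phi_mult)
lemma phi_sum: "\<phi> (sum f A) = (\<Sum>i\<in>A. \<phi> (f i))"
  by (induction A rule: infinite_finite_induct) (simp_all add: phi_0 phi_add)
lemma phi_nz: "x \<noteq> 0 \<Longrightarrow> \<phi> x \<noteq> 0"
proof
  assume "x \<noteq> 0" "\<phi> x = 0"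
  have "\<phi> 1 = \<phi> (x * inverse x)" using \<open>x \<noteq> 0\<close> by simp
  also have "\<dots> = \<phi> x * \<phi> (inverse x)" by (rule phi_mult)
  also have "\<dots> = 0" using \<open>\<phi> x = 0\<close> by simp
  finally show False using phi_1 by simp
qed
lemma phi_inj: "inj \<phi>"
proof (rule injI)
  fix x y assume "\<phi> x = \<phi> y"
  hence "\<phi> (x - y) = 0" by (simp add: phi_diff)
  thus "x = y" using phi_nz[of "x - y"] by auto
qed
lemma phi_fix: "\<phi> x ^ (q ^ k) = \<phi> x"
proof -
  have "x ^ (q ^ k) = x" using ff_pow_card_pow[of x k] card_a by simp
  thus ?thesis by (metis phi_pow)
qed

definition mp :: "'a poly \<Rightarrow> 'b poly" where "mp f = map_poly \<phi> f"

lemma coeff_mp: "coeff (mp f) i = \<phi> (coeff f i)"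
  by (simp add: mp_def coeff_map_poly phi_0)
lemma mp_add: "mp (f + g) = mp f + mp g"
  by (rule poly_eqI) (simp add: coeff_mp phi_add)
lemma mp_diff: "mp (f - g) = mp f - mp g"
  by (rule poly_eqI) (simp add: coeff_mp phi_diff)
lemma mp_mult: "mp (f * g) = mp f * mp g"
  by (rule poly_eqI) (simp add: coeff_mp coeff_mult phi_sum phi_mult)
lemma mp_1: "mp 1 = 1" by (simp add: mp_def phi_1)
lemma mp_0: "mp 0 = 0" by (simp add: mp_def)
lemma mp_const: "mp [:a:] = [:\<phi> a:]"
  by (rule poly_eqI) (simp add: coeff_mp phi_0 coeff_pCons split: nat.splits)
lemma mp_X: "mp [:0,1:] = [:0,1:]"
  by (rule poly_eqI) (simp add: coeff_mp phi_0 phi_1 coeff_pCons split: nat.splits)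
lemma mp_pow: "mp (f ^ k) = mp f ^ k"
  by (induction k) (simp_all add: mp_1 mp_mult)
lemma mp_pCons: "mp (pCons a f) = pCons (\<phi> a) (mp f)"
  by (simp add: mp_def map_poly_pCons phi_0)
lemma degree_mp: "degree (mp f) = degree f"
  unfolding mp_def by (rule degree_map_poly) (use phi_nz in auto)
lemma mp_eq_0: "mp f = 0 \<longleftrightarrow> f = 0"
proof
  assume "mp f = 0"
  hence "\<forall>i. \<phi> (coeff f i) = 0" by (metis coeff_0 coeff_mp)
  hence "\<forall>i. coeff f i = 0" using phi_nz by blast
  thus "f = 0" by (simp add: poly_eq_iff)
qed (simp add: mp_0)
lemma mp_dvd: "f dvd g \<Longrightarrow> mp f dvd mp g"
  by (auto simp: mp_mult elim!: dvdE)

definition ev :: "'a poly \<Rightarrow> 'b \<Rightarrow> 'b" where "ev f x = poly (mp f) x"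

lemma ev_add: "ev (f + g) x = ev f x + ev g x" by (simp add: ev_def mp_add)
lemma ev_diff: "ev (f - g) x = ev f x - ev g x" by (simp add: ev_def mp_diff)
lemma ev_mult: "ev (f * g) x = ev f x * ev g x" by (simp add: ev_def mp_mult)
lemma ev_1: "ev 1 x = 1" by (simp add: ev_def mp_1)
lemma ev_0: "ev 0 x = 0" by (simp add: ev_def mp_0)
lemma ev_X: "ev [:0,1:] x = x" by (simp add: ev_def mp_X)
lemma ev_pow: "ev (f ^ k) x = ev f x ^ k" by (simp add: ev_def mp_pow)
lemma ev_const: "ev [:a:] x = \<phi> a" by (simp add: ev_def mp_const)
lemma ev_pCons: "ev (pCons a f) x = \<phi> a + x * ev f x" by (simp add: ev_def mp_pCons)

lemma frob_q_add: "(x + y :: 'b) ^ (q ^ k) = x ^ (q ^ k) + y ^ (q ^ k)"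
  using frob_add[OF char_b prime_p, of x y "n * k"] by (simp add: q_def power_mult)
lemma frob_q_diff: "(x - y :: 'b) ^ (q ^ k) = x ^ (q ^ k) - y ^ (q ^ k)"
  using frob_diff[OF char_b prime_p, of x y "n * k"] by (simp add: q_def power_mult)
lemma frob_q_inj: "(x :: 'b) ^ (q ^ k) = y ^ (q ^ k) \<Longrightarrow> x = y"
  using frob_inj[OF char_b prime_p, of x "n * k" y] by (simp add: q_def power_mult)

lemma ev_frob: "ev f (x ^ (q ^ k)) = (ev f x) ^ (q ^ k)"
proof (induction f rule: pCons_induct)
  case 0
  then show ?case using q0 by (simp add: ev_0)
next
  case (pCons a f)
  show ?case
    by (simp add: q0 ev_pCons frob_q_add pCons.IH phi_fix power_mult_distrib)
qed

definition Fix :: "nat \<Rightarrow> 'b set" where "Fix m = {x. x ^ (q ^ m) = x}"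

lemma Fix_ev: "x \<in> Fix m \<Longrightarrow> ev h x \<in> Fix m"
  by (simp add: Fix_def ev_frob[symmetric])
lemma Fix_diff: "x \<in> Fix m \<Longrightarrow> y \<in> Fix m \<Longrightarrow> x - y \<in> Fix m"
  by (simp add: Fix_def frob_q_diff)
lemma Fix_add: "x \<in> Fix m \<Longrightarrow> y \<in> Fix m \<Longrightarrow> x + y \<in> Fix m"
  by (simp add: Fix_def frob_q_add)
lemma Fix_r: "Fix r = UNIV"
  using ff_pow_card[where 'c='b] card_b by (simp add: Fix_def)

definition PX :: "nat \<Rightarrow> 'b poly" where "PX m = [:0,1:] ^ (q ^ m) - [:0,1:]"

lemma PX_degree: "m \<ge> 1 \<Longrightarrow> degree (PX m) = q ^ m"
proof -
  assume m: "m \<ge> 1"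
  have "q ^ m \<ge> q ^ 1" using q2 m by (intro power_increasing) auto
  hence "q ^ m > 1" using q2 by simp
  have "[:0,1:] ^ (q ^ m) - [:0,1:] = [:0,1:] ^ (q ^ m) + (- [:0,1::'b:])" by simp
  also have "degree \<dots> = q ^ m"
    using \<open>q ^ m > 1\<close> by (subst degree_add_eq_left) (simp_all add: degree_power_eq)
  finally show ?thesis unfolding PX_def .
qed

lemma PX_nz: "m \<ge> 1 \<Longrightarrow> PX m \<noteq> 0"
  using PX_degree[of m] qpow_ge[of m] by (metis degree_0 not_one_le_zero)

lemma PX_roots: "{x. poly (PX m) x = 0} = Fix m"
  by (simp add: PX_def Fix_def)

lemma Fix_card_le: "m \<ge> 1 \<Longrightarrow> card (Fix m) \<le> q ^ m"
  using card_poly_roots_bound[OF PX_nz, of m] PX_roots PX_degree by simp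

lemma Fix_mult: "x \<in> Fix m \<Longrightarrow> x \<in> Fix (k * m)"
proof (induction k)
  case 0 thus ?case by (simp add: Fix_def)
next
  case (Suc k)
  have "x ^ (q ^ (Suc k * m)) = (x ^ (q ^ m)) ^ (q ^ (k * m))"
    by (simp add: power_mult[symmetric] power_add[symmetric] mult.commute add.commute)
  thus ?case using Suc by (simp add: Fix_def)
qed

lemma Fix_gcd:
  assumes "x \<in> Fix a" "x \<in> Fix b" "a \<ge> 1"
  shows "x \<in> Fix (gcd a b)"
proof -
  obtain u v where uv: "a * u = b * v + gcd a b" using bezout_nat[of a b] assms(3) by auto
  have "x \<in> Fix (u * a)" using Fix_mult assms(1) by blast
  hence 1: "x ^ (q ^ (b * v + gcd a b)) = x" using uv by (simp add: Fix_def mult.commute)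
  have "x \<in> Fix (v * b)" using Fix_mult assms(2) by blast
  hence 2: "x ^ (q ^ (b * v)) = x" by (simp add: Fix_def mult.commute)
  have "x ^ (q ^ (b * v + gcd a b)) = (x ^ (q ^ (b * v))) ^ (q ^ gcd a b)"
    by (simp add: power_add power_mult)
  thus ?thesis using 1 2 by (simp add: Fix_def)
qed

lemma Fix_card_eq:
  assumes "m dvd r" "m \<ge> 1"
  shows "card (Fix m) = q ^ m"
proof -
  obtain k where k: "r = m * k" using assms(1) by blast
  have "PX m dvd [:0,1:] ^ ((q ^ m) ^ k) - [:0,1:]"
    by (rule pow_iter_dvd) (simp add: PX_def)
  hence "PX m dvd PX r" by (simp add: PX_def k power_mult)
  then obtain h where h: "PX r = PX m * h" by blast
  have "card {x. poly (PX r) x = 0} = degree (PX r)"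
    using PX_roots[of r] Fix_r PX_degree[OF r_pos] card_b by simp
  from roots_dvd_count[OF h PX_nz[OF r_pos] this]
  show ?thesis using PX_roots PX_degree[OF assms(2)] by simp
qed

end

context AS begin

definition Irr :: "nat \<Rightarrow> 'a poly set" where
  "Irr e = {g. lead_coeff g = 1 \<and> degree g = e \<and> irreducible g}"

lemma Irr_finite: "finite (Irr e)"
proof (rule finite_subset)
  show "Irr e \<subseteq> polys_below (Suc e)" by (auto simp: Irr_def polys_below_iff)
  show "finite (polys_below (Suc e) :: 'a poly set)" using polys_below_finite_card by blast
qed

lemma num_Irr: "num_monic_irred TYPE('a) e = card (Irr e)"
  by (simp add: num_monic_irred_def Irr_def)

lemma irr_deg_pos: "irreducible (g :: 'a poly) \<Longrightarrow> degree g \<ge> 1"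
proof (rule ccontr)
  assume irr: "irreducible g" and "\<not> degree g \<ge> 1"
  hence "degree g = 0" by simp
  moreover have "g \<noteq> 0" using irr by auto
  ultimately have "is_unit g" by (simp add: is_unit_iff_degree)
  thus False using irr by (simp add: irreducible_def)
qed

definition Roots :: "'a poly \<Rightarrow> 'b set" where "Roots g = {x. ev g x = 0}"

lemma irr_root_dvd:
  assumes "irreducible g" "ev g x = 0" "ev h x = 0"
  shows "g dvd h"
  by (rule ideal_irred_dvd[where I="{h. ev h x = 0}"]) (use assms in \<open>auto simp: ev_diff ev_mult ev_1\<close>)

lemma PX_dvd:
  assumes "m dvd r"
  shows "PX m dvd PX r"
proof -
  obtain k where k: "r = m * k" using assms by blast
  have "PX m dvd [:0,1:] ^ ((q ^ m) ^ k) - [:0,1:]"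
    by (rule pow_iter_dvd) (simp add: PX_def)
  thus "PX m dvd PX r" by (simp add: PX_def k power_mult)
qed

lemma irr_dvd_PX:
  assumes "irreducible g"
  shows "mp g dvd PX (degree g)"
proof -
  have "g dvd [:0,1:] ^ (CARD('a) ^ degree g) - [:0,1:]" by (rule irred_dvd_frob) fact
  hence "mp g dvd mp ([:0,1:] ^ (CARD('a) ^ degree g) - [:0,1:])" by (rule mp_dvd)
  thus ?thesis by (simp add: mp_diff mp_pow mp_X card_a PX_def)
qed

lemma irr_root_Fix:
  assumes "irreducible g" "ev g x = 0"
  shows "x \<in> Fix (degree g)"
proof -
  obtain k where k: "PX (degree g) = mp g * k" using irr_dvd_PX[OF assms(1)] by blast
  have "poly (PX (degree g)) x = 0" unfolding k using assms(2) by (simp add: ev_def)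
  thus ?thesis using PX_roots by blast
qed

lemma ev_inj:
  assumes "irreducible g" "ev g x = 0"
  shows "inj_on (\<lambda>h. ev h x) (polys_below (degree g))"
proof (rule inj_onI)
  fix h1 h2 assume h: "h1 \<in> polys_below (degree g)" "h2 \<in> polys_below (degree g)" "ev h1 x = ev h2 x"
  have "ev (h1 - h2) x = 0" using h(3) by (simp add: ev_diff)
  hence d: "g dvd h1 - h2" using irr_root_dvd assms by blast
  have pb: "h1 - h2 \<in> polys_below (degree g)" using h polys_below_diff by blast
  show "h1 = h2"
  proof (rule ccontr)
    assume "h1 \<noteq> h2"
    hence "h1 - h2 \<noteq> 0" by simp
    hence "degree (h1 - h2) < degree g" using pb by (simp add: polys_below_iff)
    moreover have "degree g \<le> degree (h1 - h2)" using dvd_imp_degree_le[OF d \<open>h1 - h2 \<noteq> 0\<close>] .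
    ultimately show False by simp
  qed
qed

lemma irr_root_le:
  assumes "irreducible g" "ev g x = 0" "m \<ge> 1" "x \<in> Fix m"
  shows "degree g \<le> m"
proof -
  have "card ((\<lambda>h. ev h x) ` polys_below (degree g)) = q ^ degree g"
    using card_image[OF ev_inj[OF assms(1,2)]] polys_below_finite_card[of "degree g", where 'c='a] card_a
    by simp
  moreover have "(\<lambda>h. ev h x) ` polys_below (degree g) \<subseteq> Fix m" using Fix_ev assms(4) by blast
  hence "card ((\<lambda>h. ev h x) ` polys_below (degree g)) \<le> card (Fix m)" by (intro card_mono) auto
  ultimately have "q ^ degree g \<le> q ^ m" using Fix_card_le[OF assms(3)] by simp
  thus ?thesis using q2 by (simp add: power_le_imp_le_exp)
qed

lemma irr_root_dvd_m:
  assumes "irreducible g" "ev g x = 0" "m \<ge> 1" "x \<in> Fix m"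
  shows "degree g dvd m"
proof -
  define e where "e = degree g"
  have e1: "e \<ge> 1" using irr_deg_pos assms(1) by (simp add: e_def)
  have "x \<in> Fix e" using irr_root_Fix assms by (simp add: e_def)
  hence "x \<in> Fix (gcd m e)" using Fix_gcd assms(3,4) by blast
  moreover have "gcd m e \<ge> 1" using assms(3) by (simp add: Suc_le_eq)
  ultimately have "e \<le> gcd m e" using irr_root_le assms(1,2) by (simp add: e_def)
  moreover have "gcd m e \<le> e" using e1 by (simp add: gcd_le2_nat)
  ultimately have "gcd m e = e" by simp
  thus ?thesis by (metis e_def gcd_dvd1)
qed

lemma irr_roots_card:
  assumes "g \<in> Irr e" "e dvd r"
  shows "card (Roots g) = e"
proof -
  have irr: "irreducible g" and dg: "degree g = e" using assms(1) by (auto simp: Irr_def)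
  have "mp g dvd PX r" using irr_dvd_PX[OF irr] PX_dvd[OF assms(2)] dg by (metis dvd_trans)
  then obtain h where h: "PX r = mp g * h" by blast
  have "card {x. poly (PX r) x = 0} = degree (PX r)"
    using PX_roots[of r] Fix_r PX_degree[OF r_pos] card_b by simp
  from roots_dvd_count[OF h PX_nz[OF r_pos] this]
  show ?thesis by (simp add: Roots_def ev_def degree_mp dg)
qed

lemma irr_orbit:
  assumes "g \<in> Irr e" "e dvd r" "ev g b = 0"
  shows "Roots g = (\<lambda>k. b ^ (q ^ k)) ` {..<e}"
proof -
  have irr: "irreducible g" and dg: "degree g = e" using assms(1) by (auto simp: Irr_def)
  have sub: "(\<lambda>k. b ^ (q ^ k)) ` {..<e} \<subseteq> Roots g"
    using assms(3) q0 by (auto simp: Roots_def ev_frob)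
  have inj: "inj_on (\<lambda>k. b ^ (q ^ k)) {..<e}"
  proof -
    have False if ik: "i < k" "k < e" "b ^ (q ^ i) = b ^ (q ^ k)" for i k
    proof -
      define t where "t = k - i"
      have kt: "k = t + i" "t \<ge> 1" using ik by (auto simp: t_def)
      have "b ^ (q ^ k) = (b ^ (q ^ t)) ^ (q ^ i)" by (simp add: kt power_add power_mult)
      hence "(b ^ (q ^ t)) ^ (q ^ i) = b ^ (q ^ i)" using ik by simp
      hence "b ^ (q ^ t) = b" by (rule frob_q_inj)
      hence "b \<in> Fix t" by (simp add: Fix_def)
      hence "e \<le> t" using irr_root_le[OF irr assms(3) kt(2)] dg by simp
      thus False using ik kt by simp
    qed
    thus ?thesis by (intro inj_onI) (metis lessThan_iff linorder_neqE_nat)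
  qed
  have "card ((\<lambda>k. b ^ (q ^ k)) ` {..<e}) = e" using card_image[OF inj] by simp
  thus ?thesis using irr_roots_card[OF assms(1,2)] sub
    by (metis card_subset_eq finite)
qed

lemma ex_irr_factor:
  assumes "h \<noteq> 0" "ev h x = 0"
  shows "\<exists>g. irreducible g \<and> lead_coeff g = 1 \<and> ev g x = 0"
  using assms
proof (induction "degree h" arbitrary: h rule: less_induct)
  case less
  show ?case
  proof (cases "irreducible h")
    case True
    define c where "c = inverse (lead_coeff h)"
    have c0: "c \<noteq> 0" using less.prems by (simp add: c_def)
    have u: "is_unit [:c:]" using c0 by (simp add: is_unit_const_poly_iff dvd_field_iff)
    have "irreducible ([:c:] * h)" using irreducible_mult_unit_left[OF u] True by simp
    moreover have "lead_coeff ([:c:] * h) = 1" using less.prems by (simp add: c_def lead_coeff_mult)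
    moreover have "ev ([:c:] * h) x = 0" using less.prems ev_mult[of "[:c:]" h x] by simp
    ultimately show ?thesis by blast
  next
    case False
    have nu: "\<not> is_unit h"
    proof
      assume "is_unit h"
      hence "degree h = 0" using less.prems by (simp add: is_unit_iff_degree)
      hence "h = [:coeff h 0:]" by (metis degree_0_id)
      hence "ev h x = \<phi> (coeff h 0)" by (metis ev_const)
      moreover have "coeff h 0 \<noteq> 0" using \<open>h = [:coeff h 0:]\<close> less.prems by auto
      ultimately show False using less.prems phi_nz by simp
    qed
    then obtain a b where ab: "h = a * b" "\<not> is_unit a" "\<not> is_unit b"
      using False less.prems by (auto simp: irreducible_def)
    have a0: "a \<noteq> 0" "b \<noteq> 0" using ab less.prems by auto
    have "degree a \<noteq> 0" using a0 ab by (auto simp: is_unit_iff_degree)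
    moreover have "degree b \<noteq> 0" using a0 ab by (auto simp: is_unit_iff_degree)
    moreover have dh: "degree h = degree a + degree b" using ab a0 by (simp add: degree_mult_eq)
    ultimately have lt: "degree a < degree h" "degree b < degree h" by auto
    have "ev a x = 0 \<or> ev b x = 0" using less.prems ab by (simp add: ev_mult)
    thus ?thesis using less.hyps lt a0 by blast
  qed
qed

lemma ex_nz_root: "\<exists>h. h \<noteq> 0 \<and> ev h x = 0"
proof -
  have c1: "card (polys_below (Suc r) :: 'a poly set) = q ^ Suc r"
    using polys_below_finite_card[of "Suc r", where 'c='a] card_a by simp
  have fin: "finite (polys_below (Suc r) :: 'a poly set)" using polys_below_finite_card by blast
  have "\<not> inj_on (\<lambda>h. ev h x) (polys_below (Suc r))"
  proof
    assume "inj_on (\<lambda>h. ev h x) (polys_below (Suc r))"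
    hence "card ((\<lambda>h. ev h x) ` polys_below (Suc r)) = q ^ Suc r" using c1 card_image by metis
    moreover have "card ((\<lambda>h. ev h x) ` polys_below (Suc r)) \<le> CARD('b)" by (rule card_mono) auto
    moreover have "q ^ r < q ^ Suc r" using q2 by simp
    ultimately show False using card_b by simp
  qed
  then obtain h1 h2 where "h1 \<noteq> h2" "ev h1 x = ev h2 x" by (auto simp: inj_on_def)
  hence "h1 - h2 \<noteq> 0" "ev (h1 - h2) x = 0" by (auto simp: ev_diff)
  thus ?thesis by blast
qed

lemma ex_irr: "\<exists>e g. e dvd r \<and> g \<in> Irr e \<and> ev g x = 0"
proof -
  obtain h where "h \<noteq> 0" "ev h x = 0" using ex_nz_root by blast
  then obtain g where g: "irreducible g" "lead_coeff g = 1" "ev g x = 0" using ex_irr_factor by blast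
  have "degree g dvd r" using irr_root_dvd_m[OF g(1) g(3) r_pos] Fix_r by simp
  thus ?thesis using g by (auto simp: Irr_def)
qed

lemma Roots_disj:
  assumes "g1 \<in> Irr e1" "g2 \<in> Irr e2" "g1 \<noteq> g2"
  shows "Roots g1 \<inter> Roots g2 = {}"
proof (rule ccontr)
  assume "Roots g1 \<inter> Roots g2 \<noteq> {}"
  then obtain x where "ev g1 x = 0" "ev g2 x = 0" by (auto simp: Roots_def)
  hence "g1 dvd g2" using irr_root_dvd assms(1) by (auto simp: Irr_def)
  hence "g1 = g2" using monic_irred_dvd_eq assms(1,2) by (auto simp: Irr_def)
  thus False using assms(3) by simp
qed

end

context AS begin

definition L :: "'b \<Rightarrow> 'b" where "L y = y ^ p - y"
definition A :: "'b set" where "A = range L"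
definition Fp :: "'b set" where "Fp = {y. y ^ p = y}"
definition Tp :: "nat \<Rightarrow> 'b \<Rightarrow> 'b" where "Tp M c = (\<Sum>i<M. c ^ (p ^ i))"

lemma frob1_add: "(x + y :: 'b) ^ p = x ^ p + y ^ p"
  using frob_add[OF char_b prime_p, of x y 1] by simp
lemma frob1_diff: "(x - y :: 'b) ^ p = x ^ p - y ^ p"
  using frob_diff[OF char_b prime_p, of x y 1] by simp

lemma L_diff: "L (x - y) = L x - L y"
  by (simp add: L_def frob1_diff)

lemma of_nat_Fp: "(of_nat k :: 'b) ^ p = of_nat k"
proof (induction k)
  case 0 then show ?case using p2 by simp
next
  case (Suc k)
  have "(of_nat (Suc k) :: 'b) ^ p = (1 + of_nat k) ^ p" by simp
  also have "\<dots> = 1 + of_nat k" by (simp add: frob1_add Suc)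
  finally show ?case by simp
qed

lemma Fp_card: "card Fp = p"
proof (rule antisym)
  define P :: "'b poly" where "P = [:0,1:] ^ p - [:0,1:]"
  have "[:0,1:] ^ p - [:0,1:] = [:0,1:] ^ p + (- [:0,1::'b:])" by simp
  also have "degree \<dots> = p"
    using p2 by (subst degree_add_eq_left) (simp_all add: degree_power_eq)
  finally have dP: "degree P = p" by (simp add: P_def)
  hence "P \<noteq> 0" using p2 by auto
  hence "card {x. poly P x = 0} \<le> degree P" by (rule card_poly_roots_bound)
  moreover have "{x. poly P x = 0} = Fp" by (simp add: P_def Fp_def)
  ultimately show "card Fp \<le> p" using dP by simp
next
  have "inj_on (of_nat :: nat \<Rightarrow> 'b) {..<p}"
  proof -
    have *: "a = b" if "a \<le> b" "b < p" "(of_nat a :: 'b) = of_nat b" for a b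
    proof -
      have "(of_nat b :: 'b) = of_nat a + of_nat (b - a)" using that(1) by (simp flip: of_nat_add)
      hence "(of_nat (b - a) :: 'b) = 0" using that(3) by simp
      hence "p dvd b - a" using of_nat_eq_0_iff_char_dvd[of "b - a", where 'a='b] char_b by simp
      moreover have "b - a < p" using that by simp
      ultimately show "a = b" using that(1) by (metis diff_is_0_eq dvd_imp_le le_antisym not_le zero_less_diff)
    qed
    show ?thesis by (rule inj_onI) (metis * lessThan_iff nat_le_linear)
  qed
  hence "card ((of_nat :: nat \<Rightarrow> 'b) ` {..<p}) = p" by (simp add: card_image)
  moreover have "(of_nat :: nat \<Rightarrow> 'b) ` {..<p} \<subseteq> Fp" using of_nat_Fp by (auto simp: Fp_def)
  hence "card ((of_nat :: nat \<Rightarrow> 'b) ` {..<p}) \<le> card Fp" by (intro card_mono) auto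
  ultimately show "p \<le> card Fp" by simp
qed

lemma L_eq_iff: "L x = L y \<longleftrightarrow> x - y \<in> Fp"
proof -
  have "L x = L y \<longleftrightarrow> L (x - y) = 0" by (simp add: L_diff)
  also have "\<dots> \<longleftrightarrow> x - y \<in> Fp" by (simp add: L_def Fp_def)
  finally show ?thesis .
qed

lemma L_fiber: "card {y. L y = L x} = p"
  using fiber_card[of UNIV L Fp x] L_eq_iff Fp_card by simp

lemma card_A: "card A * p = CARD('b)"
proof -
  have "card {x\<in>UNIV. L x \<in> UNIV} = card (UNIV \<inter> L ` UNIV) * p"
    by (rule count_pre) (use L_fiber in auto)
  thus ?thesis by (simp add: A_def)
qed

lemma sum_shift_eq:
  fixes f :: "nat \<Rightarrow> 'b"
  assumes "f M = f 0"
  shows "(\<Sum>i<M. f (Suc i)) = (\<Sum>i<M. f i)"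
proof -
  have "(\<Sum>i<M. f (Suc i) - f i) = f M - f 0" by (rule sum_lessThan_telescope)
  thus ?thesis using assms by (simp add: sum_subtractf)
qed

lemma Tp_p: "Tp M (c ^ p) = (Tp M c) ^ p"
proof -
  have "(Tp M c) ^ p = (\<Sum>i<M. (c ^ (p ^ i)) ^ p)"
    unfolding Tp_def using frob_sum[OF char_b prime_p, of "\<lambda>i. c ^ (p ^ i)" "{..<M}" 1] by simp
  also have "\<dots> = Tp M (c ^ p)" unfolding Tp_def
    by (rule sum.cong) (simp_all add: power_mult[symmetric] mult.commute)
  finally show ?thesis by simp
qed

lemma Tp_pow:
  assumes "c ^ (p ^ M) = c"
  shows "(Tp M c) ^ p = Tp M c"
proof -
  have "Tp M (c ^ p) = (\<Sum>i<M. c ^ (p ^ Suc i))" unfolding Tp_def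
    by (rule sum.cong) (simp_all add: power_mult[symmetric] mult.commute)
  also have "\<dots> = Tp M c" unfolding Tp_def
    by (rule sum_shift_eq[of "\<lambda>i. c ^ (p ^ i)"]) (simp add: assms)
  finally show ?thesis using Tp_p by simp
qed

lemma Tp_diff: "Tp M (x - y) = Tp M x - Tp M y"
  unfolding Tp_def using frob_diff[OF char_b prime_p] by (simp add: sum_subtractf)

lemma Tp_roots:
  assumes "M \<ge> 1"
  shows "card {c. Tp M c = 0} \<le> p ^ (M - 1)"
proof -
  define P :: "'b poly" where "P = (\<Sum>i<M. monom 1 (p ^ i))"
  have ev: "poly P c = Tp M c" for c by (simp add: P_def Tp_def poly_sum poly_monom)
  have dP: "degree P \<le> p ^ (M - 1)" unfolding P_def
  proof (rule degree_sum_le)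
    fix i assume "i \<in> {..<M}"
    hence "p ^ i \<le> p ^ (M - 1)" using p2 by (intro power_increasing) auto
    thus "degree (monom (1::'b) (p ^ i)) \<le> p ^ (M - 1)" by (simp add: degree_monom_eq)
  qed simp
  have "coeff P (p ^ (M - 1)) = (\<Sum>i<M. if p ^ i = p ^ (M - 1) then 1 else 0)"
    by (simp add: P_def coeff_sum coeff_monom)
  also have "\<dots> = (\<Sum>i<M. if i = M - 1 then 1 else 0)"
    using p2 by (intro sum.cong refl) (simp add: power_inject_exp eq_commute)
  also have "\<dots> = 1" using assms by simp
  finally have "P \<noteq> 0" by auto
  hence "card {c. poly P c = 0} \<le> degree P" by (rule card_poly_roots_bound)
  thus ?thesis using dP ev by simp
qed

lemma pow_pM_iter: "c ^ (p ^ M) = c \<Longrightarrow> (c :: 'b) ^ (p ^ (M * k)) = c"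
proof (induction k)
  case 0 then show ?case by simp
next
  case (Suc k)
  have "c ^ (p ^ (M * Suc k)) = (c ^ (p ^ (M * k))) ^ (p ^ M)"
    by (simp add: power_add power_mult[symmetric] mult.commute)
  thus ?case using Suc by simp
qed

lemma Tp_add_split: "Tp (a + b) c = Tp a c + (\<Sum>i<b. c ^ (p ^ (a + i)))"
  by (induction b) (simp_all add: Tp_def)

lemma Tp_period:
  assumes "(c :: 'b) ^ (p ^ M) = c"
  shows "Tp (M * k) c = of_nat k * Tp M c"
proof (induction k)
  case 0 then show ?case by (simp add: Tp_def)
next
  case (Suc k)
  have "Tp (M * Suc k) c = Tp (M * k + M) c" by (simp add: add.commute)
  also have "\<dots> = Tp (M * k) c + (\<Sum>i<M. c ^ (p ^ (M * k + i)))" by (rule Tp_add_split)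
  also have "(\<Sum>i<M. c ^ (p ^ (M * k + i))) = Tp M c" unfolding Tp_def
  proof (rule sum.cong)
    fix i
    have "c ^ (p ^ (M * k + i)) = (c ^ (p ^ (M * k))) ^ (p ^ i)"
      by (simp add: power_add power_mult)
    thus "c ^ (p ^ (M * k + i)) = c ^ (p ^ i)" using pow_pM_iter[OF assms] by simp
  qed simp
  finally show ?case using Suc by (simp add: algebra_simps)
qed

lemma card_b_p: "CARD('b) = p ^ (n * r)" using card_b q_def by (simp add: power_mult)
lemma nr_pos: "n * r \<ge> 1" using n_pos r_pos by simp

lemma pow_card_b: "(c :: 'b) ^ (p ^ (n * r)) = c"
  using ff_pow_card[of c] card_b_p by simp

lemma A_eq: "A = {c. Tp (n * r) c = 0}"
proof -
  have sub: "A \<subseteq> {c. Tp (n * r) c = 0}"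
  proof
    fix c assume "c \<in> A"
    then obtain y where y: "c = y ^ p - y" by (auto simp: A_def L_def)
    have "Tp (n * r) c = Tp (n * r) (y ^ p) - Tp (n * r) y" by (simp add: y Tp_diff)
    also have "\<dots> = 0" using Tp_pow[OF pow_card_b] Tp_p by simp
    finally show "c \<in> {c. Tp (n * r) c = 0}" by simp
  qed
  have "card A * p = p ^ (n * r)" using card_A card_b_p by simp
  moreover have "p ^ (n * r) = p ^ (n * r - 1) * p" using nr_pos
    by (metis Suc_diff_le diff_Suc_1 mult.commute power_Suc)
  ultimately have "card A = p ^ (n * r - 1)" using p2 by simp
  hence "card {c. Tp (n * r) c = 0} \<le> card A" using Tp_roots[OF nr_pos] by simp
  thus ?thesis using sub by (intro card_seteq) auto
qed

lemma Tp_ppow: "Tp (n * r) (c ^ (p ^ j)) = Tp (n * r) c"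
proof (induction j)
  case 0 then show ?case by simp
next
  case (Suc j)
  have "c ^ (p ^ Suc j) = (c ^ (p ^ j)) ^ p" by (simp add: power_mult[symmetric] mult.commute)
  hence "Tp (n * r) (c ^ (p ^ Suc j)) = (Tp (n * r) (c ^ (p ^ j))) ^ p" by (simp add: Tp_p)
  also have "\<dots> = Tp (n * r) (c ^ (p ^ j))" by (rule Tp_pow[OF pow_card_b])
  finally show ?case using Suc by simp
qed

lemma A_frob: "c ^ (q ^ k) \<in> A \<longleftrightarrow> c \<in> A"
  using Tp_ppow[of c "n * k"] by (simp add: A_eq q_def power_mult)


lemma Fix_pow_p: "c \<in> Fix e \<Longrightarrow> c ^ (p ^ (n * e)) = c"
proof -
  assume "c \<in> Fix e"
  hence "c ^ (q ^ e) = c" by (simp add: Fix_def)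
  moreover have "q ^ e = p ^ (n * e)" by (simp add: q_def power_mult)
  ultimately show ?thesis by simp
qed

lemma A_Fix_card:
  assumes "e dvd r" "e \<ge> 1"
  shows "(p dvd r div e \<longrightarrow> card (A \<inter> Fix e) = q ^ e) \<and>
         (\<not> p dvd r div e \<longrightarrow> card (A \<inter> Fix e) * p = q ^ e)"
proof -
  have nr: "n * r = (n * e) * (r div e)" using assms(1) by simp
  have TpF: "Tp (n * r) c = of_nat (r div e) * Tp (n * e) c" if "c \<in> Fix e" for c
    unfolding nr by (rule Tp_period[OF Fix_pow_p[OF that]])
  show ?thesis
  proof (intro conjI impI)
    assume "p dvd r div e"
    hence "(of_nat (r div e) :: 'b) = 0" using of_nat_eq_0_iff_char_dvd[where 'a='b] char_b by simp
    hence "Fix e \<subseteq> A" using TpF by (auto simp: A_eq)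
    hence "A \<inter> Fix e = Fix e" by blast
    thus "card (A \<inter> Fix e) = q ^ e" using Fix_card_eq[OF assms] by simp
  next
    assume nd: "\<not> p dvd r div e"
    hence "(of_nat (r div e) :: 'b) \<noteq> 0" using of_nat_eq_0_iff_char_dvd[where 'a='b] char_b by simp
    define Z where "Z = {c. Tp (n * e) c = 0}"
    have AZ: "A \<inter> Fix e = Z \<inter> Fix e" using TpF \<open>(of_nat (r div e) :: 'b) \<noteq> 0\<close>
      by (auto simp: A_eq Z_def)
    have eqv: "Tp (n * e) x = Tp (n * e) y \<longleftrightarrow> x - y \<in> Z" for x y
      by (simp add: Z_def Tp_diff)
    have fib: "card {x'\<in>Fix e. Tp (n * e) x' = Tp (n * e) x} = card (Z \<inter> Fix e)" if "x \<in> Fix e" for x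
      by (rule fiber_card) (use that eqv Fix_diff in auto)
    have "card {x\<in>Fix e. Tp (n * e) x \<in> UNIV} = card (UNIV \<inter> Tp (n * e) ` Fix e) * card (Z \<inter> Fix e)"
      by (rule count_pre) (use fib in auto)
    hence c1: "q ^ e = card (Tp (n * e) ` Fix e) * card (Z \<inter> Fix e)"
      using Fix_card_eq[OF assms] by simp
    have "Tp (n * e) ` Fix e \<subseteq> Fp" using Tp_pow[OF Fix_pow_p] by (auto simp: Fp_def)
    hence c2: "card (Tp (n * e) ` Fix e) \<le> p" using Fp_card card_mono[of Fp] by fastforce
    have ne: "n * e \<ge> 1" using n_pos assms(2) by simp
    have "card (Z \<inter> Fix e) \<le> card Z" by (rule card_mono) auto
    hence c3: "card (Z \<inter> Fix e) \<le> p ^ (n * e - 1)" using Tp_roots[OF ne] by (simp add: Z_def)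
    have qe: "q ^ e = p ^ (n * e - 1) * p" using ne q_def
      by (metis Suc_diff_le diff_Suc_1 mult.commute power_Suc power_mult)
    have "q ^ e \<le> p * card (Z \<inter> Fix e)" using c1 c2 by (simp add: mult_right_mono)
    moreover have "p * card (Z \<inter> Fix e) \<le> q ^ e" using c3 qe by (simp add: mult.commute)
    ultimately have "card (Z \<inter> Fix e) * p = q ^ e" by (simp add: mult.commute)
    thus "card (A \<inter> Fix e) * p = q ^ e" using AZ by simp
  qed
qed

lemma N_AS_eq: "N_AS p \<phi> f = card {x. ev f x \<in> A}"
proof -
  have S: "{xy :: 'b \<times> 'b. snd xy ^ p - snd xy = poly (map_poly \<phi> f) (fst xy)}
           = (SIGMA x:UNIV. {y. L y = ev f x})"
    by (auto simp: L_def ev_def mp_def)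
  have fib: "card {y. L y = ev f x} = (if ev f x \<in> A then p else 0)" for x
  proof (cases "ev f x \<in> A")
    case True
    then obtain z where "ev f x = L z" by (auto simp: A_def)
    thus ?thesis using L_fiber[of z] True by simp
  next
    case False
    have "{y. L y = ev f x} = {}"
    proof (rule ccontr)
      assume "{y. L y = ev f x} \<noteq> {}"
      then obtain y where "L y = ev f x" by auto
      hence "ev f x \<in> A" unfolding A_def by (metis rangeI)
      thus False using False by simp
    qed
    thus ?thesis using False by simp
  qed
  have "card (SIGMA x:UNIV. {y. L y = ev f x}) = (\<Sum>x\<in>UNIV. card {y. L y = ev f x})"
    by (rule card_SigmaI) auto
  also have "\<dots> = (\<Sum>x\<in>UNIV. if ev f x \<in> A then p else 0)" using fib by simp
  also have "\<dots> = (\<Sum>x\<in>{x. ev f x \<in> A}. p)"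
    by (rule sum.mono_neutral_cong_right) auto
  also have "\<dots> = p * card {x. ev f x \<in> A}" by simp
  finally have "AS_points p \<phi> f = p * card {x. ev f x \<in> A} + 1"
    unfolding AS_points_def S by simp
  thus ?thesis using p2 by (simp add: N_AS_def)
qed

end

lemma restrict_eq_iff: "restrict f J = restrict g J \<longleftrightarrow> (\<forall>j\<in>J. f j = g j)"
  by (auto simp: fun_eq_iff)

context AS begin

lemma monic_polys_eq:
  "monic_polys d = (\<lambda>h. monom 1 d + h) ` (polys_below d :: 'a poly set)"
proof (rule equalityI; rule subsetI)
  fix f :: "'a poly" assume "f \<in> monic_polys d"
  hence f: "lead_coeff f = 1" "degree f = d" by (auto simp: monic_polys_def)
  have "f - monom 1 d \<in> polys_below d" unfolding polys_below_def
  proof (intro CollectI allI impI)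
    fix i assume "d \<le> i"
    show "coeff (f - monom 1 d) i = 0"
    proof (cases "i = d")
      case True thus ?thesis using f by simp
    next
      case False
      hence "i > d" using \<open>d \<le> i\<close> by simp
      thus ?thesis using f by (simp add: coeff_eq_0)
    qed
  qed
  thus "f \<in> (\<lambda>h. monom 1 d + h) ` polys_below d" by (intro image_eqI[of _ _ "f - monom 1 d"]) auto
next
  fix f :: "'a poly" assume "f \<in> (\<lambda>h. monom 1 d + h) ` polys_below d"
  then obtain h where h: "h \<in> polys_below d" "f = monom 1 d + h" by auto
  have cd: "coeff f d = 1" using h by (simp add: polys_below_def)
  have ci: "coeff f i = 0" if "i > d" for i using h that by (simp add: polys_below_def)
  have "degree f \<le> d" using ci by (intro degree_le) auto
  moreover have "d \<le> degree f" using cd by (intro le_degree) simp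
  ultimately have "degree f = d" by simp
  thus "f \<in> monic_polys d" using cd by (simp add: monic_polys_def)
qed

lemma monic_polys_card: "card (monic_polys d :: 'a poly set) = card (polys_below d :: 'a poly set)"
  unfolding monic_polys_eq by (rule card_image) (auto intro: inj_onI)

lemma monic_polys_finite: "finite (monic_polys d :: 'a poly set)"
  unfolding monic_polys_eq using polys_below_finite_card by blast

lemma monic_polys_ne: "monic_polys d \<noteq> ({} :: 'a poly set)"
proof -
  have "(0 :: 'a poly) \<in> polys_below d" by (simp add: polys_below_def)
  thus ?thesis unfolding monic_polys_eq by blast
qed

lemma prod_irr_dvd:
  assumes "finite J" "inj_on g J" "\<And>j. j \<in> J \<Longrightarrow> g j \<in> Irr (e j)" "\<And>j. j \<in> J \<Longrightarrow> g j dvd h"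
  shows "prod g J dvd h"
  using assms
proof (induction J rule: finite_induct)
  case empty then show ?case by simp
next
  case (insert j F)
  have "prod g F dvd h" using insert by (auto intro: inj_on_subset)
  then obtain k where k: "h = prod g F * k" by blast
  have irr: "irreducible (g j)" using insert.prems(2) by (auto simp: Irr_def)
  have pr: "prime_elem (g j)" using irr by (rule field_poly_irreducible_imp_prime)
  have "\<not> g j dvd prod g F"
  proof
    assume "g j dvd prod g F"
    then obtain i where i: "i \<in> F" "g j dvd g i" using prime_elem_dvd_prod_iff'[OF pr insert.hyps(1)] by blast
    have "g j = g i" using monic_irred_dvd_eq[OF irr _ _ _ i(2)] insert.prems(2)[of j] insert.prems(2)[of i] i(1)
      by (auto simp: Irr_def)
    moreover have "i \<noteq> j" using i(1) insert.hyps(2) by auto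
    ultimately show False using insert.prems(1) i(1) by (auto simp: inj_on_def)
  qed
  moreover have "g j dvd prod g F * k" using insert.prems(3)[of j] k by simp
  ultimately have "g j dvd k" using pr by (simp add: prime_elem_dvd_mult_iff)
  then obtain k' where "k = g j * k'" by blast
  hence "h = (g j * prod g F) * k'" using k by (simp add: mult_ac)
  thus ?case using insert.hyps by simp
qed

lemma joint_count:
  fixes J :: "'j set" and g :: "'j \<Rightarrow> 'a poly" and e :: "'j \<Rightarrow> nat" and \<beta> :: "'j \<Rightarrow> 'b"
    and T :: "'j \<Rightarrow> 'b set"
  assumes finJ: "finite J" and inj: "inj_on g J" and gI: "\<And>j. j \<in> J \<Longrightarrow> g j \<in> Irr (e j)"
    and ed: "\<And>j. j \<in> J \<Longrightarrow> e j dvd r" and root: "\<And>j. j \<in> J \<Longrightarrow> ev (g j) (\<beta> j) = 0"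
    and TF: "\<And>j. j \<in> J \<Longrightarrow> T j \<subseteq> Fix (e j)" and d: "d \<ge> q ^ r"
  shows "card {f \<in> monic_polys d. \<forall>j\<in>J. ev f (\<beta> j) \<in> T j} * (\<Prod>j\<in>J. q ^ e j)
         = card (monic_polys d :: 'a poly set) * (\<Prod>j\<in>J. card (T j))"
proof -
  have irr: "irreducible (g j)" "degree (g j) = e j" "lead_coeff (g j) = 1" if "j \<in> J" for j
    using gI[OF that] by (auto simp: Irr_def)
  have e1: "e j \<ge> 1" if "j \<in> J" for j using irr_deg_pos irr[OF that] by metis
  have bF: "\<beta> j \<in> Fix (e j)" if "j \<in> J" for j using irr_root_Fix[OF irr(1)[OF that] root[OF that]] irr(2)[OF that] by simp
  define D where "D = (\<Sum>j\<in>J. e j)"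
  have DQ: "D \<le> q ^ r"
  proof -
    have "card (\<Union>j\<in>J. Roots (g j)) = (\<Sum>j\<in>J. card (Roots (g j)))"
    proof (rule card_UN_disjoint[OF finJ])
      show "\<forall>j\<in>J. finite (Roots (g j))" by simp
      show "\<forall>i\<in>J. \<forall>j\<in>J. i \<noteq> j \<longrightarrow> Roots (g i) \<inter> Roots (g j) = {}"
        using Roots_disj gI inj by (metis inj_on_contraD)
    qed
    also have "\<dots> = D" unfolding D_def by (rule sum.cong[OF refl]) (use irr_roots_card gI ed in blast)
    finally have "card (\<Union>j\<in>J. Roots (g j)) = D" .
    moreover have "card (\<Union>j\<in>J. Roots (g j)) \<le> CARD('b)" by (rule card_mono) auto
    ultimately show ?thesis using card_b by simp
  qed
  define \<psi> where "\<psi> h = restrict (\<lambda>j. ev h (\<beta> j)) J" for h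
  define P where "P = PiE J (\<lambda>j. Fix (e j))"
  have finP: "finite P" unfolding P_def using finJ by (intro finite_PiE) auto
  have cardP: "card P = (\<Prod>j\<in>J. q ^ e j)"
    unfolding P_def card_PiE[OF finJ] by (rule prod.cong[OF refl]) (use Fix_card_eq ed e1 in blast)
  have psiP: "\<psi> h \<in> P" for h unfolding \<psi>_def P_def using Fix_ev bF by (simp add: restrict_PiE_iff)
  have psi_inj: "inj_on \<psi> (polys_below D)"
  proof (rule inj_onI)
    fix h1 h2 assume h: "h1 \<in> polys_below D" "h2 \<in> polys_below D" "\<psi> h1 = \<psi> h2"
    hence z: "ev (h1 - h2) (\<beta> j) = 0" if "j \<in> J" for j
      using that by (simp add: \<psi>_def restrict_eq_iff ev_diff)
    have "g j dvd h1 - h2" if "j \<in> J" for j using irr_root_dvd[OF irr(1)[OF that] root[OF that] z[OF that]] .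
    hence dv: "prod g J dvd h1 - h2" by (intro prod_irr_dvd[OF finJ inj gI]) auto
    have dp: "degree (prod g J) = D" unfolding D_def
      using degree_prod_eq_sum_degree[of J g] irr by (auto simp: irreducible_def)
    have pb: "h1 - h2 \<in> polys_below D" using h polys_below_diff by blast
    show "h1 = h2"
    proof (rule ccontr)
      assume "h1 \<noteq> h2"
      hence "h1 - h2 \<noteq> 0" by simp
      hence "degree (h1 - h2) < D" using pb by (simp add: polys_below_iff)
      moreover have "degree (prod g J) \<le> degree (h1 - h2)" by (rule dvd_imp_degree_le) fact+
      ultimately show False using dp by simp
    qed
  qed
  have imgD: "\<psi> ` polys_below D = P"
  proof (rule card_subset_eq[OF finP])
    show "\<psi> ` polys_below D \<subseteq> P" using psiP by auto
    have "card (\<psi> ` polys_below D) = q ^ D"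
      using card_image[OF psi_inj] polys_below_finite_card[of D, where 'c='a] card_a by simp
    also have "\<dots> = (\<Prod>j\<in>J. q ^ e j)" unfolding D_def by (rule power_sum)
    finally show "card (\<psi> ` polys_below D) = card P" using cardP by simp
  qed
  define G0 where "G0 = (polys_below d :: 'a poly set)"
  have finG0: "finite G0" unfolding G0_def using polys_below_finite_card by blast
  define \<psi>' where "\<psi>' h = \<psi> (monom 1 d + h)" for h
  define Z where "Z = {h. \<forall>j\<in>J. ev h (\<beta> j) = 0}"
  have eqv: "\<psi>' x = \<psi>' y \<longleftrightarrow> x - y \<in> Z" for x y
    by (simp add: \<psi>'_def \<psi>_def restrict_eq_iff Z_def ev_add ev_diff)
  have fib: "card {x'\<in>G0. \<psi>' x' = \<psi>' x} = card (Z \<inter> G0)" if "x \<in> G0" for x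
    by (rule fiber_card) (use that eqv polys_below_diff in \<open>auto simp: G0_def\<close>)
  have imgG: "\<psi>' ` G0 = P"
  proof (rule equalityI)
    show "\<psi>' ` G0 \<subseteq> P" using psiP by (auto simp: \<psi>'_def)
  next
    show "P \<subseteq> \<psi>' ` G0"
    proof
      fix v assume v: "v \<in> P"
      define w where "w = restrict (\<lambda>j. v j - ev (monom 1 d) (\<beta> j)) J"
      have "w \<in> P" unfolding w_def P_def restrict_PiE_iff
      proof
        fix j assume j: "j \<in> J"
        have "v j \<in> Fix (e j)" using v j by (auto simp: P_def)
        thus "v j - ev (monom 1 d) (\<beta> j) \<in> Fix (e j)" using Fix_diff Fix_ev bF[OF j] by blast
      qed
      then obtain h where h: "h \<in> polys_below D" "\<psi> h = w" using imgD by blast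
      have "h \<in> G0" using h(1) polys_below_mono[of D d] DQ d by (auto simp: G0_def)
      moreover have "\<psi>' h = v"
      proof (rule ext)
        fix j
        show "\<psi>' h j = v j"
        proof (cases "j \<in> J")
          case True
          have "w j = ev h (\<beta> j)" using h(2) True by (auto simp: \<psi>_def dest: fun_cong[of _ _ j])
          hence "v j - ev (monom 1 d) (\<beta> j) = ev h (\<beta> j)" using True by (simp add: w_def)
          hence "v j = ev (monom 1 d) (\<beta> j) + ev h (\<beta> j)" by (simp add: algebra_simps)
          thus ?thesis using True by (simp add: \<psi>'_def \<psi>_def ev_add)
        next
          case False
          thus ?thesis using v by (simp add: \<psi>'_def \<psi>_def P_def PiE_def extensional_def)
        qed
      qed
      ultimately show "v \<in> \<psi>' ` G0" by blast
    qed
  qed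
  define S where "S = {h\<in>G0. \<psi>' h \<in> PiE J T}"
  have cS: "card S = card (PiE J T \<inter> \<psi>' ` G0) * card (Z \<inter> G0)"
    unfolding S_def by (rule count_pre[OF finG0]) (use fib in auto)
  have "PiE J T \<subseteq> P" unfolding P_def using TF by (rule PiE_mono)
  hence cS': "card S = (\<Prod>j\<in>J. card (T j)) * card (Z \<inter> G0)"
    using cS imgG card_PiE[OF finJ, of T] by (simp add: Int_absorb2)
  have "card {x\<in>G0. \<psi>' x \<in> UNIV} = card (UNIV \<inter> \<psi>' ` G0) * card (Z \<inter> G0)"
    by (rule count_pre[OF finG0]) (use fib in auto)
  hence cG: "card G0 = (\<Prod>j\<in>J. q ^ e j) * card (Z \<inter> G0)" using imgG cardP by simp
  have "{f \<in> monic_polys d. \<forall>j\<in>J. ev f (\<beta> j) \<in> T j} = (\<lambda>h. monom 1 d + h) ` S"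
    unfolding monic_polys_eq S_def G0_def \<psi>'_def \<psi>_def by (auto simp: restrict_PiE_iff)
  hence "card {f \<in> monic_polys d. \<forall>j\<in>J. ev f (\<beta> j) \<in> T j} = card S"
    by (simp add: card_image inj_on_def)
  moreover have "card (monic_polys d :: 'a poly set) = card G0" by (simp add: monic_polys_card G0_def)
  ultimately show ?thesis using cS' cG by (simp add: mult_ac)
qed

end

context AS begin

definition E :: "nat set" where "E = {e. e dvd r}"

lemma E_finite: "finite E"
proof (rule finite_subset)
  show "E \<subseteq> {..r}" using r_pos by (auto simp: E_def dest: dvd_imp_le)
qed simp

lemma E_pos: "e \<in> E \<Longrightarrow> e \<ge> 1"
  using r_pos by (cases "e = 0") (auto simp: E_def)

definition enum :: "nat \<Rightarrow> nat \<Rightarrow> 'a poly" where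
  "enum e = (SOME h. bij_betw h {1..card (Irr e)} (Irr e))"

lemma enum_bij: "bij_betw (enum e) {1..card (Irr e)} (Irr e)"
proof -
  obtain h where "bij_betw h {1..card (Irr e)} (Irr e)" using ex_bij_betw_nat_finite_1[OF Irr_finite] by blast
  thus ?thesis unfolding enum_def by (rule someI[where P = "\<lambda>h. bij_betw h {1..card (Irr e)} (Irr e)"])
qed

definition Isig :: "(nat \<times> nat) set" where "Isig = Sigma E (\<lambda>e. {1..card (Irr e)})"
definition gI :: "nat \<times> nat \<Rightarrow> 'a poly" where "gI j = enum (fst j) (snd j)"
definition bI :: "nat \<times> nat \<Rightarrow> 'b" where "bI j = (SOME x. ev (gI j) x = 0)"

lemma Isig_finite: "finite Isig"
  unfolding Isig_def by (intro finite_SigmaI E_finite) simp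

lemma Isig_mem: "j \<in> Isig \<longleftrightarrow> fst j \<in> E \<and> snd j \<in> {1..card (Irr (fst j))}"
  by (cases j) (simp add: Isig_def)

lemma gI_Irr: "j \<in> Isig \<Longrightarrow> gI j \<in> Irr (fst j)"
proof -
  assume j: "j \<in> Isig"
  have "enum (fst j) ` {1..card (Irr (fst j))} = Irr (fst j)" using enum_bij[of "fst j"] by (simp add: bij_betw_def)
  moreover have "snd j \<in> {1..card (Irr (fst j))}" using j by (simp add: Isig_mem)
  ultimately show ?thesis unfolding gI_def by blast
qed

lemma eI_dvd: "j \<in> Isig \<Longrightarrow> fst j dvd r"
  by (simp add: Isig_mem E_def)

lemma gI_inj: "inj_on gI Isig"
proof (rule inj_onI)
  fix j j' assume jj: "j \<in> Isig" "j' \<in> Isig" "gI j = gI j'"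
  have "degree (gI j) = fst j" using gI_Irr[OF jj(1)] by (simp add: Irr_def)
  moreover have "degree (gI j') = fst j'" using gI_Irr[OF jj(2)] by (simp add: Irr_def)
  ultimately have fe: "fst j = fst j'" using jj(3) by simp
  have inj: "inj_on (enum (fst j)) {1..card (Irr (fst j))}" using enum_bij[of "fst j"] by (simp add: bij_betw_def)
  have m1: "snd j \<in> {1..card (Irr (fst j))}" using jj(1) by (simp only: Isig_mem)
  have m2: "snd j' \<in> {1..card (Irr (fst j))}" using jj(2) fe by (simp only: Isig_mem)
  have eq: "enum (fst j) (snd j) = enum (fst j) (snd j')" using jj(3) fe by (simp add: gI_def)
  have "snd j = snd j'" using inj_onD[OF inj eq m1 m2] .
  thus "j = j'" using fe by (simp add: prod_eq_iff)
qed

lemma bI_root: "j \<in> Isig \<Longrightarrow> ev (gI j) (bI j) = 0"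
proof -
  assume j: "j \<in> Isig"
  have "card (Roots (gI j)) = fst j" using irr_roots_card[OF gI_Irr[OF j] eI_dvd[OF j]] .
  moreover have "fst j \<ge> 1" using j E_pos by (simp add: Isig_mem)
  ultimately have "Roots (gI j) \<noteq> {}" by auto
  hence "\<exists>x. ev (gI j) x = 0" by (auto simp: Roots_def)
  thus ?thesis unfolding bI_def by (rule someI_ex)
qed

lemma Isig_cover: "\<exists>j\<in>Isig. x \<in> Roots (gI j)"
proof -
  obtain e g where eg: "e dvd r" "g \<in> Irr e" "ev g x = 0" using ex_irr by blast
  have "g \<in> enum e ` {1..card (Irr e)}" using enum_bij[of e] eg(2) by (simp add: bij_betw_def)
  then obtain i where "i \<in> {1..card (Irr e)}" "enum e i = g" by blast
  moreover have "(e, i) \<in> Isig" using \<open>i \<in> {1..card (Irr e)}\<close> eg(1) by (simp add: Isig_mem E_def)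
  ultimately show ?thesis using eg(3) by (intro bexI[of _ "(e, i)"]) (simp_all add: gI_def Roots_def)
qed

lemma Isig_disj: "j \<in> Isig \<Longrightarrow> j' \<in> Isig \<Longrightarrow> j \<noteq> j' \<Longrightarrow> Roots (gI j) \<inter> Roots (gI j') = {}"
proof -
  assume jj: "j \<in> Isig" "j' \<in> Isig" "j \<noteq> j'"
  have "gI j \<noteq> gI j'" using gI_inj jj unfolding inj_on_def by blast
  thus ?thesis by (rule Roots_disj[OF gI_Irr[OF jj(1)] gI_Irr[OF jj(2)]])
qed

lemma card_UN_Roots:
  assumes "J \<subseteq> Isig"
  shows "card (\<Union>j\<in>J. Roots (gI j)) = (\<Sum>j\<in>J. fst j)"
proof -
  have fin: "finite J" using assms Isig_finite finite_subset by blast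
  have "card (\<Union>j\<in>J. Roots (gI j)) = (\<Sum>j\<in>J. card (Roots (gI j)))"
  proof (rule card_UN_disjoint[OF fin])
    show "\<forall>i\<in>J. finite (Roots (gI i))" by simp
    show "\<forall>i\<in>J. \<forall>j\<in>J. i \<noteq> j \<longrightarrow> Roots (gI i) \<inter> Roots (gI j) = {}"
      using assms Isig_disj by blast
  qed
  also have "\<dots> = (\<Sum>j\<in>J. fst j)"
    by (rule sum.cong[OF refl]) (use assms irr_roots_card gI_Irr eI_dvd in blast)
  finally show ?thesis .
qed

lemma sum_eI: "(\<Sum>j\<in>Isig. fst j) = q ^ r"
proof -
  have "(\<Union>j\<in>Isig. Roots (gI j)) = UNIV" using Isig_cover by blast
  thus ?thesis using card_UN_Roots[of Isig] card_b by simp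
qed

lemma N_formula: "N_AS p \<phi> f = (\<Sum>j\<in>Isig. if ev f (bI j) \<in> A then fst j else 0)"
proof -
  have eqU: "{x. ev f x \<in> A} = (\<Union>j\<in>Isig. {x \<in> Roots (gI j). ev f x \<in> A})" using Isig_cover by blast
  have "card (\<Union>j\<in>Isig. {x \<in> Roots (gI j). ev f x \<in> A}) = (\<Sum>j\<in>Isig. card {x \<in> Roots (gI j). ev f x \<in> A})"
  proof (rule card_UN_disjoint[OF Isig_finite])
    show "\<forall>i\<in>Isig. finite {x \<in> Roots (gI i). ev f x \<in> A}" by simp
    show "\<forall>i\<in>Isig. \<forall>j\<in>Isig. i \<noteq> j \<longrightarrow> {x \<in> Roots (gI i). ev f x \<in> A} \<inter> {x \<in> Roots (gI j). ev f x \<in> A} = {}"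
      using Isig_disj by blast
  qed
  hence "card {x. ev f x \<in> A} = (\<Sum>j\<in>Isig. card {x \<in> Roots (gI j). ev f x \<in> A})"
    using eqU by simp
  also have "\<dots> = (\<Sum>j\<in>Isig. if ev f (bI j) \<in> A then fst j else 0)"
  proof (rule sum.cong[OF refl])
    fix j assume j: "j \<in> Isig"
    have orb: "Roots (gI j) = (\<lambda>k. bI j ^ (q ^ k)) ` {..<fst j}"
      by (rule irr_orbit[OF gI_Irr[OF j] eI_dvd[OF j] bI_root[OF j]])
    have "ev f x \<in> A \<longleftrightarrow> ev f (bI j) \<in> A" if "x \<in> Roots (gI j)" for x
    proof -
      have "x \<in> (\<lambda>k. bI j ^ (q ^ k)) ` {..<fst j}" using that orb by simp
      then obtain k where "x = bI j ^ (q ^ k)" by blast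
      thus ?thesis by (simp add: ev_frob A_frob)
    qed
    hence "{x \<in> Roots (gI j). ev f x \<in> A} = (if ev f (bI j) \<in> A then Roots (gI j) else {})" by auto
    thus "card {x \<in> Roots (gI j). ev f x \<in> A} = (if ev f (bI j) \<in> A then fst j else 0)"
      using irr_roots_card[OF gI_Irr[OF j] eI_dvd[OF j]] by simp
  qed
  finally show ?thesis by (simp add: N_AS_eq)
qed

lemma ev_bI_Fix: "j \<in> Isig \<Longrightarrow> ev f (bI j) \<in> Fix (fst j)"
proof -
  assume j: "j \<in> Isig"
  have "irreducible (gI j)" "degree (gI j) = fst j" using gI_Irr[OF j] by (auto simp: Irr_def)
  hence "bI j \<in> Fix (fst j)" using irr_root_Fix[of "gI j" "bI j"] bI_root[OF j] by simp
  thus ?thesis by (rule Fix_ev)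
qed

lemma Fix_sub_A: "e dvd r \<Longrightarrow> e \<ge> 1 \<Longrightarrow> p dvd r div e \<Longrightarrow> Fix e \<subseteq> A"
proof -
  assume a: "e dvd r" "e \<ge> 1" "p dvd r div e"
  have "card (A \<inter> Fix e) = card (Fix e)" using A_Fix_card[OF a(1,2)] a(3) Fix_card_eq[OF a(1,2)] by simp
  hence "A \<inter> Fix e = Fix e" by (intro card_subset_eq) auto
  thus ?thesis by blast
qed

end

context AS begin

lemma coprime_prime_iff: "coprime m p \<longleftrightarrow> \<not> p dvd m"
proof
  assume c: "coprime m p"
  show "\<not> p dvd m"
  proof
    assume "p dvd m"
    hence "is_unit p" using coprime_common_divisor[OF c] by simp
    thus False using p2 by simp
  qed
next
  assume "\<not> p dvd m"
  hence "coprime p m" using prime_imp_coprime[OF prime_p] by simp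
  thus "coprime m p" by (simp add: coprime_commute)
qed

definition Phi :: "(nat \<times> nat) set \<Rightarrow> 'a poly \<Rightarrow> (nat \<times> nat \<Rightarrow> bool)" where
  "Phi J f = (\<lambda>j. if j \<in> J then ev f (bI j) \<in> A else False)"

lemma card_T_true:
  assumes "j \<in> Isig" "\<not> p dvd r div fst j"
  shows "real (card (A \<inter> Fix (fst j))) = real (q ^ fst j) * (1 / real p)"
proof -
  have "fst j dvd r" "fst j \<ge> 1" using assms(1) eI_dvd E_pos by (auto simp: Isig_mem)
  hence "card (A \<inter> Fix (fst j)) * p = q ^ fst j" using A_Fix_card assms(2) by blast
  hence "real (card (A \<inter> Fix (fst j))) * real p = real (q ^ fst j)" by (metis of_nat_mult)
  thus ?thesis using p2 by (simp add: field_simps)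
qed

lemma card_T_false:
  assumes "j \<in> Isig" "\<not> p dvd r div fst j"
  shows "real (card (Fix (fst j) - A)) = real (q ^ fst j) * (1 - 1 / real p)"
proof -
  have e: "fst j dvd r" "fst j \<ge> 1" using assms(1) eI_dvd E_pos by (auto simp: Isig_mem)
  have "Fix (fst j) - A = Fix (fst j) - (A \<inter> Fix (fst j))" by blast
  hence "card (Fix (fst j) - A) = card (Fix (fst j)) - card (A \<inter> Fix (fst j))"
    by (simp add: card_Diff_subset)
  moreover have "card (A \<inter> Fix (fst j)) \<le> card (Fix (fst j))" by (rule card_mono) auto
  ultimately have "real (card (Fix (fst j) - A)) = real (card (Fix (fst j))) - real (card (A \<inter> Fix (fst j)))"
    by simp
  thus ?thesis using card_T_true[OF assms] Fix_card_eq[OF e] by (simp add: algebra_simps)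
qed

lemma dist_lemma:
  assumes J: "J \<subseteq> Isig" and nd: "\<And>j. j \<in> J \<Longrightarrow> \<not> p dvd r div fst j" and d: "d \<ge> q ^ r"
  shows "map_pmf (Phi J) (pmf_of_set (monic_polys d)) = Pi_pmf J False (\<lambda>_. bernoulli_pmf (1 / real p))"
proof (rule pmf_eqI)
  fix X :: "nat \<times> nat \<Rightarrow> bool"
  define G where "G = (monic_polys d :: 'a poly set)"
  have finJ: "finite J" using J Isig_finite finite_subset by blast
  have finG: "finite G" "G \<noteq> {}" using monic_polys_finite monic_polys_ne by (auto simp: G_def)
  have pL: "pmf (map_pmf (Phi J) (pmf_of_set G)) X = real (card (G \<inter> Phi J -` {X})) / real (card G)"
    using finG by (simp add: pmf_map measure_pmf_of_set)
  have p01: "0 \<le> 1 / real p" "1 / real p \<le> 1" using p2 by auto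
  show "pmf (map_pmf (Phi J) (pmf_of_set (monic_polys d))) X = pmf (Pi_pmf J False (\<lambda>_. bernoulli_pmf (1 / real p))) X"
  proof (cases "\<forall>x. x \<notin> J \<longrightarrow> X x = False")
    case False
    then obtain x where x: "x \<notin> J" "X x" by auto
    have "G \<inter> Phi J -` {X} = {}"
    proof (rule ccontr)
      assume "G \<inter> Phi J -` {X} \<noteq> {}"
      then obtain f where "Phi J f = X" by auto
      hence "Phi J f x = X x" by simp
      thus False using x by (simp add: Phi_def)
    qed
    hence l: "pmf (map_pmf (Phi J) (pmf_of_set (monic_polys d))) X = 0" using pL unfolding G_def by simp
    have nc: "\<not> (\<forall>x. x \<notin> J \<longrightarrow> X x = False)" using x by blast
    have "pmf (Pi_pmf J False (\<lambda>_. bernoulli_pmf (1 / real p))) X = 0"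
      unfolding pmf_Pi[OF finJ] using nc by (rule if_not_P)
    thus ?thesis using l by simp
  next
    case True
    define T where "T j = (if X j then A \<inter> Fix (fst j) else Fix (fst j) - A)" for j
    have jI: "j \<in> Isig" if "j \<in> J" for j using that J by blast
    have eq: "G \<inter> Phi J -` {X} = {f \<in> G. \<forall>j\<in>J. ev f (bI j) \<in> T j}"
    proof (rule set_eqI)
      fix f
      have "Phi J f = X \<longleftrightarrow> (\<forall>j\<in>J. (ev f (bI j) \<in> A) = X j)"
      proof
        assume H: "Phi J f = X"
        show "\<forall>j\<in>J. (ev f (bI j) \<in> A) = X j"
        proof
          fix j assume "j \<in> J"
          have "Phi J f j = X j" using H by simp
          thus "(ev f (bI j) \<in> A) = X j" using \<open>j \<in> J\<close> by (simp add: Phi_def)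
        qed
      next
        assume H: "\<forall>j\<in>J. (ev f (bI j) \<in> A) = X j"
        show "Phi J f = X"
        proof (rule ext)
          fix j
          show "Phi J f j = X j"
          proof (cases "j \<in> J")
            case True thus ?thesis using H by (simp add: Phi_def)
          next
            case False
            hence "X j = False" using \<open>\<forall>x. x \<notin> J \<longrightarrow> X x = False\<close> by blast
            thus ?thesis using False by (simp add: Phi_def)
          qed
        qed
      qed
      also have "\<dots> \<longleftrightarrow> (\<forall>j\<in>J. ev f (bI j) \<in> T j)"
      proof (rule ball_cong[OF refl])
        fix j assume "j \<in> J"
        have "ev f (bI j) \<in> Fix (fst j)" using ev_bI_Fix jI[OF \<open>j \<in> J\<close>] by blast
        thus "((ev f (bI j) \<in> A) = X j) = (ev f (bI j) \<in> T j)" by (cases "X j") (simp_all add: T_def)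
      qed
      finally show "f \<in> G \<inter> Phi J -` {X} \<longleftrightarrow> f \<in> {f \<in> G. \<forall>j\<in>J. ev f (bI j) \<in> T j}" by auto
    qed
    have jc: "card {f \<in> monic_polys d. \<forall>j\<in>J. ev f (bI j) \<in> T j} * (\<Prod>j\<in>J. q ^ fst j)
         = card (monic_polys d :: 'a poly set) * (\<Prod>j\<in>J. card (T j))"
    proof (rule joint_count[OF finJ inj_on_subset[OF gI_inj J]])
      show "\<And>j. j \<in> J \<Longrightarrow> gI j \<in> Irr (fst j)" using gI_Irr jI by blast
      show "\<And>j. j \<in> J \<Longrightarrow> fst j dvd r" using eI_dvd jI by blast
      show "\<And>j. j \<in> J \<Longrightarrow> ev (gI j) (bI j) = 0" using bI_root jI by blast
      show "\<And>j. j \<in> J \<Longrightarrow> T j \<subseteq> Fix (fst j)" by (auto simp: T_def)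
    qed (fact d)
    have cT: "real (card (T j)) = real (q ^ fst j) * pmf (bernoulli_pmf (1 / real p)) (X j)" if "j \<in> J" for j
    proof (cases "X j")
      case True
      thus ?thesis using card_T_true[OF jI[OF that] nd[OF that]] p01 by (simp add: T_def)
    next
      case False
      thus ?thesis using card_T_false[OF jI[OF that] nd[OF that]] p01 by (simp add: T_def)
    qed
    define S where "S = {f \<in> G. \<forall>j\<in>J. ev f (bI j) \<in> T j}"
    have "real (card S) * (\<Prod>j\<in>J. real (q ^ fst j)) = real (card G) * (\<Prod>j\<in>J. real (card (T j)))"
    proof -
      have "real (card S * (\<Prod>j\<in>J. q ^ fst j)) = real (card G * (\<Prod>j\<in>J. card (T j)))"
        using jc unfolding S_def G_def by simp
      thus ?thesis by (simp only: of_nat_mult of_nat_prod)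
    qed
    also have "(\<Prod>j\<in>J. real (card (T j))) = (\<Prod>j\<in>J. real (q ^ fst j)) * (\<Prod>j\<in>J. pmf (bernoulli_pmf (1 / real p)) (X j))"
      by (simp add: cT prod.distrib)
    finally have "real (card S) * (\<Prod>j\<in>J. real (q ^ fst j)) = (real (card G) * (\<Prod>j\<in>J. pmf (bernoulli_pmf (1 / real p)) (X j))) * (\<Prod>j\<in>J. real (q ^ fst j))"
      by (simp add: mult_ac)
    moreover have "(\<Prod>j\<in>J. real (q ^ fst j)) \<noteq> 0" using q2 by (simp add: prod_zero_iff finJ)
    ultimately have "real (card S) = real (card G) * (\<Prod>j\<in>J. pmf (bernoulli_pmf (1 / real p)) (X j))"
      by simp
    moreover have "card G > 0" using finG by (simp add: card_gt_0_iff)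
    ultimately have "real (card S) / real (card G) = (\<Prod>j\<in>J. pmf (bernoulli_pmf (1 / real p)) (X j))"
      by (simp add: field_simps)
    moreover have "pmf (Pi_pmf J False (\<lambda>_. bernoulli_pmf (1 / real p))) X = (\<Prod>j\<in>J. pmf (bernoulli_pmf (1 / real p)) (X j))"
      unfolding pmf_Pi[OF finJ] using True by (rule if_P)
    ultimately show ?thesis using pL eq unfolding S_def G_def by simp
  qed
qed

end

context AS begin

lemma div_swap:
  assumes "e dvd r" "p dvd r" "e > 0"
  shows "e dvd r div p \<longleftrightarrow> p dvd r div e"
  using dvd_div_iff_mult[of p r e] dvd_div_iff_mult[of e r p] assms p2 by (simp add: mult.commute)

definition Ssum :: "nat set \<Rightarrow> (nat \<times> nat \<Rightarrow> bool) \<Rightarrow> nat" where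
  "Ssum E' X = (\<Sum>e\<in>E'. e * (\<Sum>i\<in>{1..card (Irr e)}. of_bool (X (e, i))))"

lemma bern_eq:
  "bern_sum_pmf p E' (num_monic_irred TYPE('a)) =
   map_pmf (Ssum E') (Pi_pmf (Sigma E' (\<lambda>e. {1..card (Irr e)})) False (\<lambda>_. bernoulli_pmf (1 / real p)))"
  unfolding bern_sum_pmf_def Ssum_def by (simp only: num_Irr)

lemma Ssum_Phi:
  assumes "E' \<subseteq> E"
  shows "Ssum E' (Phi (Sigma E' (\<lambda>e. {1..card (Irr e)})) f)
         = (\<Sum>j\<in>Sigma E' (\<lambda>e. {1..card (Irr e)}). if ev f (bI j) \<in> A then fst j else 0)"
proof -
  have finE': "finite E'" using assms E_finite finite_subset by blast
  have "Ssum E' (Phi (Sigma E' (\<lambda>e. {1..card (Irr e)})) f)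
        = (\<Sum>e\<in>E'. \<Sum>i\<in>{1..card (Irr e)}. e * of_bool (Phi (Sigma E' (\<lambda>e. {1..card (Irr e)})) f (e, i)))"
    unfolding Ssum_def by (simp only: sum_distrib_left)
  also have "\<dots> = (\<Sum>(e,i)\<in>Sigma E' (\<lambda>e. {1..card (Irr e)}). e * of_bool (Phi (Sigma E' (\<lambda>e. {1..card (Irr e)})) f (e, i)))"
    by (rule sum.Sigma) (use finE' in auto)
  also have "\<dots> = (\<Sum>j\<in>Sigma E' (\<lambda>e. {1..card (Irr e)}). if ev f (bI j) \<in> A then fst j else 0)"
    by (rule sum.cong[OF refl]) (auto simp: Phi_def)
  finally show ?thesis .
qed

lemma Isig_eq: "Isig = Sigma E (\<lambda>e. {1..card (Irr e)})" by (simp add: Isig_def)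

lemma count_single:
  assumes j: "j \<in> Isig" and d: "d \<ge> q ^ r"
  shows "real (card {f \<in> monic_polys d. ev f (bI j) \<in> A})
         = real (card (monic_polys d :: 'a poly set)) * (if p dvd r div fst j then 1 else 1 / real p)"
proof -
  have e: "fst j dvd r" "fst j \<ge> 1" using j eI_dvd E_pos by (auto simp: Isig_mem)
  have jc: "card {f \<in> monic_polys d. \<forall>j'\<in>{j}. ev f (bI j') \<in> A \<inter> Fix (fst j')} * (\<Prod>j'\<in>{j}. q ^ fst j')
         = card (monic_polys d :: 'a poly set) * (\<Prod>j'\<in>{j}. card (A \<inter> Fix (fst j')))"
  proof (rule joint_count)
    show "inj_on gI {j}" by simp
    show "finite {j}" by simp
    show "\<And>j'. j' \<in> {j} \<Longrightarrow> gI j' \<in> Irr (fst j')" using gI_Irr[OF j] by simp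
    show "\<And>j'. j' \<in> {j} \<Longrightarrow> fst j' dvd r" using eI_dvd[OF j] by simp
    show "\<And>j'. j' \<in> {j} \<Longrightarrow> ev (gI j') (bI j') = 0" using bI_root[OF j] by simp
    show "\<And>j'. j' \<in> {j} \<Longrightarrow> A \<inter> Fix (fst j') \<subseteq> Fix (fst j')" by blast
  qed (fact d)
  have "{f \<in> monic_polys d. \<forall>j'\<in>{j}. ev f (bI j') \<in> A \<inter> Fix (fst j')} = {f \<in> monic_polys d. ev f (bI j) \<in> A}"
    using ev_bI_Fix[OF j] by auto
  hence jc': "card {f \<in> monic_polys d. ev f (bI j) \<in> A} * q ^ fst j = card (monic_polys d :: 'a poly set) * card (A \<inter> Fix (fst j))"
    using jc by simp
  have cA: "real (card (A \<inter> Fix (fst j))) = real (q ^ fst j) * (if p dvd r div fst j then 1 else 1 / real p)"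
  proof (cases "p dvd r div fst j")
    case True
    thus ?thesis using A_Fix_card[OF e] by simp
  next
    case False
    thus ?thesis using card_T_true[OF j False] by simp
  qed
  have "real (card {f \<in> monic_polys d. ev f (bI j) \<in> A}) * real (q ^ fst j)
        = real (card (monic_polys d :: 'a poly set)) * real (card (A \<inter> Fix (fst j)))"
    using jc' by (simp only: of_nat_mult[symmetric])
  also have "\<dots> = (real (card (monic_polys d :: 'a poly set)) * (if p dvd r div fst j then 1 else 1 / real p)) * real (q ^ fst j)"
    using cA by simp
  finally show ?thesis using q2 by simp
qed

lemma expect_formula:
  assumes d: "d \<ge> q ^ r"
  shows "measure_pmf.expectation (pmf_of_set (monic_polys d :: 'a poly set)) (\<lambda>f. real (N_AS p \<phi> f))
         = (\<Sum>j\<in>Isig. real (fst j) * (if p dvd r div fst j then 1 else 1 / real p))"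
proof -
  define G where "G = (monic_polys d :: 'a poly set)"
  have finG: "finite G" "G \<noteq> {}" using monic_polys_finite monic_polys_ne by (auto simp: G_def)
  have "(\<Sum>f\<in>G. real (N_AS p \<phi> f)) = (\<Sum>f\<in>G. \<Sum>j\<in>Isig. if ev f (bI j) \<in> A then real (fst j) else 0)"
  proof (rule sum.cong[OF refl])
    fix f
    show "real (N_AS p \<phi> f) = (\<Sum>j\<in>Isig. if ev f (bI j) \<in> A then real (fst j) else 0)"
      unfolding N_formula of_nat_sum by (rule sum.cong[OF refl]) simp
  qed
  also have "\<dots> = (\<Sum>j\<in>Isig. \<Sum>f\<in>G. if ev f (bI j) \<in> A then real (fst j) else 0)"
    by (rule sum.swap)
  also have "\<dots> = (\<Sum>j\<in>Isig. real (fst j) * real (card {f \<in> G. ev f (bI j) \<in> A}))"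
  proof (rule sum.cong[OF refl])
    fix j
    have "(\<Sum>f\<in>G. if ev f (bI j) \<in> A then real (fst j) else 0) = (\<Sum>f\<in>{f \<in> G. ev f (bI j) \<in> A}. real (fst j))"
      using sum.inter_filter[OF finG(1), of "\<lambda>_. real (fst j)"] by simp
    thus "(\<Sum>f\<in>G. if ev f (bI j) \<in> A then real (fst j) else 0) = real (fst j) * real (card {f \<in> G. ev f (bI j) \<in> A})"
      by simp
  qed
  also have "\<dots> = (\<Sum>j\<in>Isig. real (fst j) * (real (card G) * (if p dvd r div fst j then 1 else 1 / real p)))"
    by (rule sum.cong[OF refl]) (use count_single d in \<open>simp add: G_def\<close>)
  also have "\<dots> = real (card G) * (\<Sum>j\<in>Isig. real (fst j) * (if p dvd r div fst j then 1 else 1 / real p))"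
    by (simp add: sum_distrib_left mult_ac)
  finally have "(\<Sum>f\<in>G. real (N_AS p \<phi> f)) / real (card G) = (\<Sum>j\<in>Isig. real (fst j) * (if p dvd r div fst j then 1 else 1 / real p))"
    using finG by (simp add: card_gt_0_iff)
  thus ?thesis using finG by (simp add: integral_pmf_of_set G_def)
qed

lemma case_i:
  assumes cop: "coprime r p" and d: "d \<ge> q ^ r"
  shows "map_pmf (N_AS p \<phi>) (pmf_of_set (monic_polys d :: 'a poly set))
           = bern_sum_pmf p {e. e dvd r} (num_monic_irred TYPE('a))
         \<and> measure_pmf.expectation (pmf_of_set (monic_polys d :: 'a poly set)) (\<lambda>f. real (N_AS p \<phi> f))
           = real q ^ r / real p"
proof -
  have npr: "\<not> p dvd r" using cop coprime_prime_iff by simp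
  have nd: "\<not> p dvd r div fst j" if "j \<in> Isig" for j
  proof
    assume "p dvd r div fst j"
    moreover have "r div fst j dvd r" using eI_dvd[OF that] by (metis dvd_div_mult_self dvd_triv_left)
    ultimately show False using npr dvd_trans by blast
  qed
  define U where "U = pmf_of_set (monic_polys d :: 'a poly set)"
  have setU: "set_pmf U = monic_polys d" unfolding U_def
    using monic_polys_finite monic_polys_ne by (simp add: set_pmf_of_set)
  have "map_pmf (N_AS p \<phi>) U = map_pmf (\<lambda>f. Ssum E (Phi Isig f)) U"
    by (rule map_pmf_cong[OF refl]) (simp only: N_formula Isig_eq Ssum_Phi[OF subset_refl])
  also have "\<dots> = map_pmf (Ssum E) (map_pmf (Phi Isig) U)" by (simp add: map_pmf_comp)
  also have "map_pmf (Phi Isig) U = Pi_pmf Isig False (\<lambda>_. bernoulli_pmf (1 / real p))"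
    unfolding U_def by (rule dist_lemma) (use nd d in auto)
  also have "map_pmf (Ssum E) \<dots> = bern_sum_pmf p {e. e dvd r} (num_monic_irred TYPE('a))"
    by (simp add: bern_eq Isig_eq E_def)
  finally have 1: "map_pmf (N_AS p \<phi>) U = bern_sum_pmf p {e. e dvd r} (num_monic_irred TYPE('a))" .
  have "measure_pmf.expectation U (\<lambda>f. real (N_AS p \<phi> f)) = (\<Sum>j\<in>Isig. real (fst j) * (1 / real p))"
    unfolding U_def expect_formula[OF d] by (rule sum.cong[OF refl]) (use nd in simp)
  also have "\<dots> = real (\<Sum>j\<in>Isig. fst j) / real p" by (simp add: sum_divide_distrib of_nat_sum)
  also have "\<dots> = real q ^ r / real p" by (simp add: sum_eI)
  finally show ?thesis using 1 by (simp add: U_def)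
qed

end

context AS begin

definition E2 :: "nat set" where "E2 = {e. e dvd r \<and> coprime (r div e) p}"
definition I2 :: "(nat \<times> nat) set" where "I2 = Sigma E2 (\<lambda>e. {1..card (Irr e)})"

lemma E2_sub: "E2 \<subseteq> E" by (auto simp: E2_def E_def)

lemma I2_sub: "I2 \<subseteq> Isig" using E2_sub by (auto simp: I2_def Isig_def)

lemma I2_iff: "j \<in> Isig \<Longrightarrow> j \<in> I2 \<longleftrightarrow> \<not> p dvd r div fst j"
proof -
  assume j: "j \<in> Isig"
  have "j \<in> I2 \<longleftrightarrow> fst j \<in> E2" using j by (cases j) (simp add: I2_def Isig_def)
  also have "\<dots> \<longleftrightarrow> coprime (r div fst j) p" using eI_dvd[OF j] by (simp add: E2_def)
  also have "\<dots> \<longleftrightarrow> \<not> p dvd r div fst j" by (rule coprime_prime_iff)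
  finally show ?thesis .
qed

lemma c0_eq:
  assumes pr: "p dvd r"
  shows "(\<Sum>j\<in>Isig - I2. fst j) = q ^ (r div p)"
proof -
  define m where "m = r div p"
  have m1: "m \<ge> 1" using pr r_pos p2 by (auto simp: m_def elim!: dvdE)
  have mr: "m dvd r" using pr by (auto simp: m_def elim!: dvdE)
  have "Fix m = (\<Union>j\<in>Isig - I2. Roots (gI j))"
  proof (rule equalityI; rule subsetI)
    fix x assume x: "x \<in> Fix m"
    obtain j where j: "j \<in> Isig" "x \<in> Roots (gI j)" using Isig_cover by blast
    have irr: "irreducible (gI j)" "degree (gI j) = fst j" using gI_Irr[OF j(1)] by (auto simp: Irr_def)
    have "fst j dvd m" using irr_root_dvd_m[OF irr(1) _ m1 x] j(2) irr(2) by (simp add: Roots_def)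
    moreover have "fst j > 0" using E_pos[of "fst j"] j(1) by (simp add: Isig_mem)
    ultimately have "p dvd r div fst j" using div_swap[OF eI_dvd[OF j(1)] pr] by (simp add: m_def)
    hence "j \<notin> I2" using I2_iff[OF j(1)] by simp
    thus "x \<in> (\<Union>j\<in>Isig - I2. Roots (gI j))" using j by blast
  next
    fix x assume "x \<in> (\<Union>j\<in>Isig - I2. Roots (gI j))"
    then obtain j where j: "j \<in> Isig" "j \<notin> I2" "x \<in> Roots (gI j)" by blast
    have irr: "irreducible (gI j)" "degree (gI j) = fst j" using gI_Irr[OF j(1)] by (auto simp: Irr_def)
    have "p dvd r div fst j" using I2_iff[OF j(1)] j(2) by simp
    moreover have "fst j > 0" using E_pos[of "fst j"] j(1) by (simp add: Isig_mem)
    ultimately have dm: "fst j dvd m" using div_swap[OF eI_dvd[OF j(1)] pr] by (simp add: m_def)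
    have "x \<in> Fix (fst j)" using irr_root_Fix[OF irr(1)] j(3) irr(2) by (simp add: Roots_def)
    hence "x \<in> Fix ((m div fst j) * fst j)" by (rule Fix_mult)
    thus "x \<in> Fix m" using dm by simp
  qed
  hence "card (Fix m) = (\<Sum>j\<in>Isig - I2. fst j)" using card_UN_Roots[of "Isig - I2"] by simp
  thus ?thesis using Fix_card_eq[OF mr m1] by (simp add: m_def)
qed

lemma N_split:
  assumes pr: "p dvd r"
  shows "N_AS p \<phi> f = q ^ (r div p) + Ssum E2 (Phi I2 f)"
proof -
  have "N_AS p \<phi> f = (\<Sum>j\<in>Isig - I2. if ev f (bI j) \<in> A then fst j else 0)
                     + (\<Sum>j\<in>I2. if ev f (bI j) \<in> A then fst j else 0)"
    unfolding N_formula by (rule sum.subset_diff[OF I2_sub Isig_finite])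
  also have "(\<Sum>j\<in>Isig - I2. if ev f (bI j) \<in> A then fst j else 0) = (\<Sum>j\<in>Isig - I2. fst j)"
  proof (rule sum.cong[OF refl])
    fix j assume j: "j \<in> Isig - I2"
    have "p dvd r div fst j" using I2_iff j by blast
    hence "Fix (fst j) \<subseteq> A" using Fix_sub_A eI_dvd E_pos j by (auto simp: Isig_mem)
    hence "ev f (bI j) \<in> A" using ev_bI_Fix j by blast
    thus "(if ev f (bI j) \<in> A then fst j else 0) = fst j" by simp
  qed
  also have "\<dots> = q ^ (r div p)" by (rule c0_eq[OF pr])
  also have "(\<Sum>j\<in>I2. if ev f (bI j) \<in> A then fst j else 0) = Ssum E2 (Phi I2 f)"
    unfolding I2_def by (rule Ssum_Phi[OF E2_sub, symmetric])
  finally show ?thesis .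
qed

lemma case_ii:
  assumes pr: "p dvd r" and d: "d \<ge> q ^ r"
  shows "map_pmf (\<lambda>f. int (N_AS p \<phi> f) - int (q ^ (r div p))) (pmf_of_set (monic_polys d :: 'a poly set))
           = map_pmf int (bern_sum_pmf p {e. e dvd r \<and> coprime (r div e) p} (num_monic_irred TYPE('a)))
         \<and> measure_pmf.expectation (pmf_of_set (monic_polys d :: 'a poly set)) (\<lambda>f. real (N_AS p \<phi> f))
           = real q ^ r / real p + (1 - 1 / real p) * real q ^ (r div p)"
proof -
  define U where "U = pmf_of_set (monic_polys d :: 'a poly set)"
  have "map_pmf (\<lambda>f. int (N_AS p \<phi> f) - int (q ^ (r div p))) U = map_pmf (\<lambda>f. int (Ssum E2 (Phi I2 f))) U"
    by (rule map_pmf_cong[OF refl]) (simp add: N_split[OF pr])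
  also have "\<dots> = map_pmf int (map_pmf (Ssum E2) (map_pmf (Phi I2) U))" by (simp add: map_pmf_comp)
  also have "map_pmf (Phi I2) U = Pi_pmf I2 False (\<lambda>_. bernoulli_pmf (1 / real p))"
    unfolding U_def by (rule dist_lemma[OF I2_sub _ d]) (use I2_iff I2_sub in blast)
  also have "map_pmf (Ssum E2) \<dots> = bern_sum_pmf p {e. e dvd r \<and> coprime (r div e) p} (num_monic_irred TYPE('a))"
    by (simp add: bern_eq I2_def E2_def)
  finally have 1: "map_pmf (\<lambda>f. int (N_AS p \<phi> f) - int (q ^ (r div p))) U
      = map_pmf int (bern_sum_pmf p {e. e dvd r \<and> coprime (r div e) p} (num_monic_irred TYPE('a)))" .
  define c0 where "c0 = real (q ^ (r div p))"
  have "(\<Sum>j\<in>Isig. real (fst j) * (if p dvd r div fst j then 1 else 1 / real p))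
        = (\<Sum>j\<in>Isig - I2. real (fst j) * (if p dvd r div fst j then 1 else 1 / real p))
          + (\<Sum>j\<in>I2. real (fst j) * (if p dvd r div fst j then 1 else 1 / real p))"
    by (rule sum.subset_diff[OF I2_sub Isig_finite])
  also have "(\<Sum>j\<in>Isig - I2. real (fst j) * (if p dvd r div fst j then 1 else 1 / real p))
             = (\<Sum>j\<in>Isig - I2. real (fst j))"
    by (rule sum.cong[OF refl]) (use I2_iff in auto)
  also have "\<dots> = c0" unfolding c0_def using c0_eq[OF pr] by (metis of_nat_sum)
  also have "(\<Sum>j\<in>I2. real (fst j) * (if p dvd r div fst j then 1 else 1 / real p))
             = (\<Sum>j\<in>I2. real (fst j)) / real p"
    by (simp add: sum_divide_distrib) (rule sum.cong[OF refl], use I2_iff I2_sub in auto)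
  also have "(\<Sum>j\<in>I2. real (fst j)) = real (q ^ r) - c0"
  proof -
    have "(\<Sum>j\<in>Isig. real (fst j)) = (\<Sum>j\<in>Isig - I2. real (fst j)) + (\<Sum>j\<in>I2. real (fst j))"
      by (rule sum.subset_diff[OF I2_sub Isig_finite])
    moreover have "(\<Sum>j\<in>Isig. real (fst j)) = real (q ^ r)" using sum_eI by (metis of_nat_sum)
    moreover have "(\<Sum>j\<in>Isig - I2. real (fst j)) = c0" unfolding c0_def using c0_eq[OF pr] by (metis of_nat_sum)
    ultimately show ?thesis by simp
  qed
  finally have "(\<Sum>j\<in>Isig. real (fst j) * (if p dvd r div fst j then 1 else 1 / real p))
      = c0 + (real (q ^ r) - c0) / real p" .
  also have "\<dots> = real q ^ r / real p + (1 - 1 / real p) * real q ^ (r div p)"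
    using p2 by (simp add: c0_def field_simps)
  finally have 2: "measure_pmf.expectation U (\<lambda>f. real (N_AS p \<phi> f))
      = real q ^ r / real p + (1 - 1 / real p) * real q ^ (r div p)"
    unfolding U_def expect_formula[OF d] .
  show ?thesis using 1 2 by (simp add: U_def)
qed

end

theorem theorem5:
  fixes p n r d q :: nat
    and \<phi> :: "'a::{finite,field} \<Rightarrow> 'b::{finite,field}"
  assumes "prime p" and "n \<ge> 1" and "q = p ^ n" and "r \<ge> 1"
    and "CARD('a) = q" and "CARD('b) = q ^ r" and "is_ring_hom \<phi>"
    and "coprime d p" and "d \<ge> q ^ r"
  shows "(coprime r p \<longrightarrow>
           map_pmf (N_AS p \<phi>) (pmf_of_set (monic_polys d :: 'a poly set))
             = bern_sum_pmf p {e. e dvd r} (num_monic_irred TYPE('a))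
         \<and> measure_pmf.expectation (pmf_of_set (monic_polys d :: 'a poly set))
             (\<lambda>f. real (N_AS p \<phi> f)) = real q ^ r / real p)
       \<and> (p dvd r \<longrightarrow>
           map_pmf (\<lambda>f. int (N_AS p \<phi> f) - int (q ^ (r div p)))
               (pmf_of_set (monic_polys d :: 'a poly set))
             = map_pmf int (bern_sum_pmf p {e. e dvd r \<and> coprime (r div e) p}
                                (num_monic_irred TYPE('a)))
         \<and> measure_pmf.expectation (pmf_of_set (monic_polys d :: 'a poly set))
             (\<lambda>f. real (N_AS p \<phi> f))
             = real q ^ r / real p + (1 - 1 / real p) * real q ^ (r div p))"
  proof -
  interpret AS p n r q \<phi>
    by unfold_locales (use assms in auto)
  show ?thesis using case_i[OF _ assms(9)] case_ii[OF _ assms(9)] by blast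
qed

end
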